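(* Let $\Sigma$ be a signature on standard form over a variable system with the de Bruijn property, $F=(F,\sigma,\theta):\mathcal F_\Sigma\to\mathcal C$ a cwf morphism, and $\Pi$ a predicate signature on standard form over $\Sigma$. Let $\mathcal D=(\mathcal C,\mathrm{Pr}^{\mathcal D},\forall',\exists')$ be a first-order hyperdoctrine over $\mathcal C$, and suppose that for each $(\Gamma_R,R)\in\Pi$ an element $R^*\in\mathrm{Pr}^{\mathcal D}(F(\Gamma_R))$ is given. Then there is a unique $F$-based hyperdoctrine morphism $G:\mathcal H_{\Sigma,\Pi,\emptyset}\to\mathcal D$ with $G_{\Gamma_R}(\Gamma_R,R(\mathrm{OV}(\Gamma_R)))=R^*$ for each $(\Gamma_R,R)\in\Pi$.
   Context: Type system: fix an infinite set $V$ of variables with decidable equality and a fresh variable provider: functions $\varphi,\mathsf{fr}$ assigning to each finite $X\subseteq V$ an inhabited $\varphi(X)\subseteq V\setminus X$ and $\mathsf{fr}(X)\in\varphi(X)$; de Bruijn property: $\varphi(X)=\{\mathsf{fr}(X)\}$. Disjoint sets $F$ (function symbols), $T$ (type symbols). Preelements: terms from variables and $F$; pretypes $S(t_1,\ldots,t_n)$, $S\in T$. $\mathrm V(E)$: variables of $E$; $E[\bar a/\bar x]$: simultaneous substitution. Precontext $\Gamma=x_1:A_1,\ldots,x_n:A_n$ with $x_k\in\varphi(\{x_1,\ldots,x_{k-1}\})$, $\mathrm V(A_k)\subseteq\{x_1,\ldots,x_{k-1}\}$; $\mathrm{OV}(\Gamma)=x_1,\ldots,x_n$; $\mathrm{Fresh}(\Gamma)=\varphi(\mathrm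 V(\Gamma))$, $\mathrm{fresh}(\Gamma)=\mathsf{fr}(\mathrm V(\Gamma))$; $E[\bar a/\Gamma]=E[\bar a/x_1,\ldots,x_n]$. Top variables $\mathrm{TV}(\langle\rangle)=\emptyset$, $\mathrm{TV}(\Gamma,x:A)=(\mathrm{TV}(\Gamma)\setminus\mathrm V(A))\cup\{x\}$; a determining sequence is a strictly increasing $\bar i=i_1,\ldots,i_k$ with $\mathrm{TV}(\Gamma)\subseteq\{x_{i_1},\ldots,x_{i_k}\}$, $\bar a_{\bar i}=a_{i_1},\ldots,a_{i_k}$; a declaration is on standard form if $\bar i=1,\ldots,n$ (then $\bar i$ is omitted). Declarations $(\Gamma,S,\bar i)$ and $(\Gamma,f,\bar i,U)$ ($\mathrm V(U)\subseteq\mathrm V(\Gamma)$), each symbol at most once. $\mathcal J(\Sigma)$: smallest set of judgements closed under (R1) $\langle\rangle$ context; (R2) $\Gamma$ context, $A$ type $(\Gamma)$ $\Rightarrow$ $\Gamma,x:A$ context ($x\in\mathrm{Fresh}(\Gamma)$); (R3) $x_1:A_1,\ldots,x_n:A_n$ context $\Rightarrow$ $x_i:A_i\ (x_1:A_1,\ldots,x_n:A_n)$; (R4) $(\Gamma,S,\bar i)\in\Sigma$, $\bar a:\Delta\to\Gamma$ $\Rightarrow$ $S(\bar a_{\bar i})$ type $(\Delta)$; (R5) $(\Gamma,f,\bar i,U)\in\Sigma$, $\bar a:\Delta\to\Gamma$, $U[\bar a/\Gamma]$ type $(\Delta)$ $\Rightarrow$ $f(\bar a_{\bar i}):U[\bar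 a/\Gamma]\ (\Delta)$; where "$\bar a:\Delta\to\Gamma$" abbreviates $\Delta$ context, $\Gamma$ context, $a_k:A_k[a_1,\ldots,a_{k-1}/x_1,\ldots,x_{k-1}]\ (\Delta)$. $\Sigma$ is a signature if declared contexts are contexts and declared $U$ are types in $\mathcal J(\Sigma)$. Cwf: a category $\mathcal C$ with terminal object; classes $\mathrm{Ty}(\Gamma)$ with functorial substitution $A\{f\}$; context extension $\Gamma.A$ with $\mathrm p(A):\Gamma.A\to\Gamma$; classes $\mathrm{Tm}(\Gamma,A)$ with functorial $a\{f\}\in\mathrm{Tm}(\Delta,A\{f\})$; $\mathrm v_A\in\mathrm{Tm}(\Gamma.A,A\{\mathrm p(A)\})$; $\langle f,a\rangle_A:\Delta\to\Gamma.A$ for $a\in\mathrm{Tm}(\Delta,A\{f\})$ with $\mathrm p(A)\langle f,a\rangle_A=f$, $\mathrm v_A\{\langle f,a\rangle_A\}=a$, $\langle\mathrm p(A)h,\mathrm v_A\{h\}\rangle_A=h$, $\langle f,a\rangle_A g=\langle fg,a\{g\}\rangle_A$; $f.A=\langle f\circ\mathrm p(A\{f\}),\mathrm v_{A\{f\}}\rangle_A:\Delta.A\{f\}\to\Gamma.A$. A cwf morphism $(F,\sigma,\theta):\mathcal C\to\mathcal C'$: a functor $F$ preserving the terminal object, $\sigma_\Gamma:\mathrm{Ty}(\Gamma)\to\mathrm{Ty}'(F\Gamma)$ with $\sigma_\Delta(A\{f\})=\sigma_\Gamma(A)\{Ff\}$, $F(\Gamma.A)=F\Gamma.\sigma_\Gamma(A)$,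 $F(\mathrm p(A))=\mathrm p(\sigma_\Gamma(A))$, and $\theta_{\Gamma,A}:\mathrm{Tm}(\Gamma,A)\to\mathrm{Tm}'(F\Gamma,\sigma_\Gamma(A))$ commuting with substitution, with $\theta(\mathrm v_A)=\mathrm v_{\sigma_\Gamma(A)}$ and $F\langle f,a\rangle_A=\langle Ff,\theta(a)\rangle_{\sigma_\Gamma(A)}$. The cwf $\mathcal F_\Sigma$: objects are contexts $\Gamma$ (i.e. ($\Gamma$ context)$\in\mathcal J(\Sigma)$); morphisms $(\Delta,\Gamma,\bar a)$ with $\bar a:\Delta\to\Gamma$ in $\mathcal J(\Sigma)$, composed by substitution, identity $(\Gamma,\Gamma,\mathrm{OV}(\Gamma))$; $\mathrm{Ty}(\Gamma)=\{(\Gamma,A):(A\text{ type }(\Gamma))\in\mathcal J(\Sigma)\}$, $(\Gamma,A)\{(\Delta,\Gamma,\bar a)\}=(\Delta,A[\bar a/\Gamma])$; $\mathrm{Tm}(\Gamma,(\Gamma,A))=\{((\Gamma,A),a):(a:A\ (\Gamma))\in\mathcal J(\Sigma)\}$; $\Gamma.(\Gamma,S)=\langle\Gamma,\mathrm{fresh}(\Gamma):S\rangle$, $\mathrm p=(\Gamma.(\Gamma,S),\Gamma,\mathrm{OV}(\Gamma))$, $\mathrm v=((\Gamma.(\Gamma,S),S),\mathrm{fresh}(\Gamma))$, $\langle(\Delta,\Gamma,\bar s),((\Delta,S[\bar s/\Gamma]),b)\rangle=(\Delta,\Gamma.(\Gamma,S),(\bar s,b))$. Heyting (pre)algebra: a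 preorder $\le$ (not necessarily antisymmetric) with $\top,\bot,\wedge,\vee,\to$ satisfying $\bot\le x\le\top$, $z\le x\wedge y$ iff $z\le x$ and $z\le y$, $x\vee y\le z$ iff $x\le z$ and $y\le z$, $z\le(x\to y)$ iff $z\wedge x\le y$; morphisms are monotone maps preserving the operations and constants. A first-order hyperdoctrine over a cwf $\mathcal C$ is $(\mathcal C,\mathrm{Pr},\forall,\exists)$ with $\mathrm{Pr}:\mathcal C^{\mathrm{op}}\to\mathrm{Heyting}$ a functor ($R\{f\}=\mathrm{Pr}(f)(R)$) and, for $S\in\mathrm{Ty}(\Gamma)$, monotone $\forall_S,\exists_S:\mathrm{Pr}(\Gamma.S)\to\mathrm{Pr}(\Gamma)$ with $Q\le\forall_S(R)$ iff $Q\{\mathrm p(S)\}\le R$, and $\exists_S(R)\le Q$ iff $R\le Q\{\mathrm p(S)\}$ ($Q\in\mathrm{Pr}(\Gamma)$, $R\in\mathrm{Pr}(\Gamma.S)$), and for $f:\Delta\to\Gamma$: $\forall_S(R)\{f\}=\forall_{S\{f\}}(R\{f.S\})$, $\exists_S(R)\{f\}=\exists_{S\{f\}}(R\{f.S\})$. Given a cwf morphism $F=(F,\sigma,\theta):\mathcal C\to\mathcal C'$ and hyperdoctrines $\mathcal H=(\mathcal C,\mathrm{Pr},\forall,\exists)$, $\mathcal H'=(\mathcal C',\mathrm{Pr}',\forall',\exists')$, an $F$-based morphism $G:\mathcal H\to\mathcal H'$ is a family of Heyting morphisms $G_\Gamma:\mathrm{Pr}(\Gamma)\to\mathrm{Pr}'(F\Gamma)$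 with $G_\Delta(R\{f\})=G_\Gamma(R)\{Ff\}$ for $f:\Delta\to\Gamma$, $G_\Gamma(\forall_S R)=\forall'_{\sigma_\Gamma(S)}(G_{\Gamma.S}R)$ and $G_\Gamma(\exists_S R)=\exists'_{\sigma_\Gamma(S)}(G_{\Gamma.S}R)$. Logic: predicate symbols from a set $P$ disjoint from $F\cup T$; a predicate declaration is $(\Gamma,\bar i,R)$ with ($\Gamma$ context)$\in\mathcal J(\Sigma)$, $\bar i$ determining, $R\in P$ (written $(\Gamma,R)$ on standard form); a predicate signature $\Pi$ declares each symbol at most once. $\mathrm{Form}(\Sigma,\Pi)$ is the smallest set of judgements "$\phi$ form $(\Gamma)$" with: $R(\bar a_{\bar i})$ form $(\Delta)$ for $(\Gamma,\bar i,R)\in\Pi$ and $\bar a:\Delta\to\Gamma$ in $\mathcal J(\Sigma)$; $\bot,\top$ form $(\Gamma)$ for contexts $\Gamma$; $(\phi\circ\psi)$ form $(\Gamma)$ for $\circ\in\{\wedge,\vee,\to\}$ from $\phi,\psi$ form $(\Gamma)$; $(Qx:A)\phi$ form $(\Gamma)$ for $Q\in\{\forall,\exists\}$ from $\phi$ form $(\Gamma,x:A)$ (with $(A\text{ type }(\Gamma))\in\mathcal J(\Sigma)$). Capture-avoiding substitution for $\bar a:\Delta\to\Gamma$: $\phi\{(\Delta,\Gamma,\bar a)\}=\phi[\bar a/\Gamma]$ for atomic $\phi$; it commutes with $\top,\bot,\wedge,\vee,\to$; and $((Qx:A)\theta)\{(\Delta,\Gamma,\bar a)\}=(Qy:A[\bar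 a/\Gamma])\,\theta\{(\langle\Delta,y:A[\bar a/\Gamma]\rangle,\langle\Gamma,x:A\rangle,(\bar a,y))\}$ with $y=\mathrm{fresh}(\Delta)$. A sequent is $\phi\Rightarrow_\Gamma\psi$ with $\phi,\psi$ form $(\Gamma)$; a theory is a set of sequents. Write $\mathbf p_\Gamma(x:A)=(\langle\Gamma,x:A\rangle,\Gamma,\mathrm{OV}(\Gamma))$. $\mathrm{Thm}(\Sigma,\Pi,T)$ is the smallest set of sequents containing $T$ and closed under: $\phi\Rightarrow_\Gamma\phi$; cut; $\theta\wedge\psi\Rightarrow_\Gamma\theta$, $\theta\wedge\psi\Rightarrow_\Gamma\psi$, from $\phi\Rightarrow_\Gamma\theta$, $\phi\Rightarrow_\Gamma\psi$ infer $\phi\Rightarrow_\Gamma\theta\wedge\psi$, $\phi\Rightarrow_\Gamma\top$; $\theta\Rightarrow_\Gamma\theta\vee\psi$, $\psi\Rightarrow_\Gamma\theta\vee\psi$, from $\theta\Rightarrow_\Gamma\phi$, $\psi\Rightarrow_\Gamma\phi$ infer $\theta\vee\psi\Rightarrow_\Gamma\phi$, $\bot\Rightarrow_\Gamma\phi$; $\theta\wedge\psi\Rightarrow_\Gamma\phi$ iff $\theta\Rightarrow_\Gamma\psi\to\phi$; $\phi\{\mathbf p_\Gamma(x:A)\}\Rightarrow_{\Gamma,x:A}\psi$ iff $\phi\Rightarrow_\Gamma(\forall x:A)\psi$; $\psi\Rightarrow_{\Gamma,x:A}\phi\{\mathbf p_\Gamma(x:A)\}$ iff $(\exists x:A)\psi\Rightarrow_\Gamma\phi$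 (each "iff" read as two rules); and substitution: from $\phi\Rightarrow_\Gamma\psi$ and $\bar a:\Delta\to\Gamma$ infer $\phi\{(\Delta,\Gamma,\bar a)\}\Rightarrow_\Delta\psi\{(\Delta,\Gamma,\bar a)\}$. Lindenbaum–Tarski hyperdoctrine $\mathcal H_{\Sigma,\Pi,T}=(\mathcal F_\Sigma,\mathrm{Pr}_{\Sigma,\Pi,T},\forall,\exists)$: $\mathrm{Pr}_{\Sigma,\Pi,T}(\Gamma)=\{(\Gamma,\phi):(\phi\text{ form }(\Gamma))\in\mathrm{Form}(\Sigma,\Pi)\}$ ordered by $(\Gamma,\phi)\le(\Gamma,\psi)$ iff $(\phi\Rightarrow_\Gamma\psi)\in\mathrm{Thm}(\Sigma,\Pi,T)$, Heyting operations given by the connectives; $\mathrm{Pr}((\Delta,\Gamma,\bar a))(\Gamma,\phi)=(\Delta,\phi\{(\Delta,\Gamma,\bar a)\})$; $\forall_{(\Gamma,A)}(\langle\Gamma,x:A\rangle,\psi)=(\Gamma,(\forall x:A)\psi)$, $\exists_{(\Gamma,A)}(\langle\Gamma,x:A\rangle,\psi)=(\Gamma,(\exists x:A)\psi)$. $\mathcal H_{\Sigma,\Pi,\emptyset}$ is the case $T=\emptyset$. *)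

theory Defs
  imports Main
begin

section \<open>Variable systems\<close>

definition varsys :: "('v set \<Rightarrow> 'v set) \<Rightarrow> ('v set \<Rightarrow> 'v) \<Rightarrow> bool" where
  "varsys phi fr \<longleftrightarrow> infinite (UNIV :: 'v set) \<and>
     (\<forall>X. finite X \<longrightarrow> phi X \<subseteq> - X \<and> phi X \<noteq> {} \<and> fr X \<in> phi X)"

definition debruijn :: "('v set \<Rightarrow> 'v set) \<Rightarrow> ('v set \<Rightarrow> 'v) \<Rightarrow> bool" where
  "debruijn phi fr \<longleftrightarrow> (\<forall>X. finite X \<longrightarrow> phi X = {fr X})"

section \<open>Preelements, pretypes, precontexts\<close>

datatype ('v, 'f) ptm = Var 'v | App 'f "('v, 'f) ptm list"

datatype ('v, 'f, 't) pty = Ty 't "('v, 'f) ptm list"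

type_synonym ('v, 'f, 't) ctx = "('v \<times> ('v, 'f, 't) pty) list"

fun vars_tm :: "('v, 'f) ptm \<Rightarrow> 'v set" where
  "vars_tm (Var x) = {x}"
| "vars_tm (App f ts) = \<Union> (set (map vars_tm ts))"

fun vars_ty :: "('v, 'f, 't) pty \<Rightarrow> 'v set" where
  "vars_ty (Ty S ts) = \<Union> (set (map vars_tm ts))"

definition ctxV :: "('v, 'f, 't) ctx \<Rightarrow> 'v set" where
  "ctxV G = set (map fst G) \<union> \<Union> (set (map (vars_ty \<circ> snd) G))"

abbreviation OV :: "('v, 'f, 't) ctx \<Rightarrow> 'v list" where
  "OV G \<equiv> map fst G"

fun subst_tm :: "('v \<Rightarrow> ('v, 'f) ptm) \<Rightarrow> ('v, 'f) ptm \<Rightarrow> ('v, 'f) ptm" where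
  "subst_tm s (Var x) = s x"
| "subst_tm s (App f ts) = App f (map (subst_tm s) ts)"

fun subst_ty :: "('v \<Rightarrow> ('v, 'f) ptm) \<Rightarrow> ('v, 'f, 't) pty \<Rightarrow> ('v, 'f, 't) pty" where
  "subst_ty s (Ty S ts) = Ty S (map (subst_tm s) ts)"

definition sub_of :: "'v list \<Rightarrow> ('v, 'f) ptm list \<Rightarrow> 'v \<Rightarrow> ('v, 'f) ptm" where
  "sub_of xs as v = (case map_of (zip xs as) v of Some a \<Rightarrow> a | None \<Rightarrow> Var v)"

definition TV :: "('v, 'f, 't) ctx \<Rightarrow> 'v set" where
  "TV G = foldl (\<lambda>S (x, A). (S - vars_ty A) \<union> {x}) {} G"

text \<open>Determining sequences (indices are 0-based here: index i stands for x_(i+1)).\<close>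
definition determining :: "('v, 'f, 't) ctx \<Rightarrow> nat list \<Rightarrow> bool" where
  "determining G is \<longleftrightarrow> sorted_wrt (<) is \<and> (\<forall>i\<in>set is. i < length G) \<and>
     TV G \<subseteq> (\<lambda>i. fst (G ! i)) ` set is"

section \<open>Signatures and the judgements J(Sigma)\<close>

record ('v, 'f, 't) sig =
  TD :: "'t \<Rightarrow> (('v, 'f, 't) ctx \<times> nat list) option"
  FD :: "'f \<Rightarrow> (('v, 'f, 't) ctx \<times> nat list \<times> ('v, 'f, 't) pty) option"

datatype ('v, 'f, 't) judg =
    Ctx "('v, 'f, 't) ctx"
  | IsType "('v, 'f, 't) ctx" "('v, 'f, 't) pty"
  | HasType "('v, 'f) ptm" "('v, 'f, 't) pty" "('v, 'f, 't) ctx"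

inductive_set Jset :: "('v set \<Rightarrow> 'v set) \<Rightarrow> ('v, 'f, 't) sig \<Rightarrow> ('v, 'f, 't) judg set"
  for phi :: "'v set \<Rightarrow> 'v set" and Sg :: "('v, 'f, 't) sig" where
  R1: "Ctx [] \<in> Jset phi Sg"
| R2: "\<lbrakk> Ctx G \<in> Jset phi Sg; IsType G A \<in> Jset phi Sg; x \<in> phi (ctxV G) \<rbrakk>
       \<Longrightarrow> Ctx (G @ [(x, A)]) \<in> Jset phi Sg"
| R3: "\<lbrakk> Ctx G \<in> Jset phi Sg; i < length G \<rbrakk>
       \<Longrightarrow> HasType (Var (fst (G ! i))) (snd (G ! i)) G \<in> Jset phi Sg"
| R4: "\<lbrakk> TD Sg S = Some (G, is);
         Ctx D \<in> Jset phi Sg; Ctx G \<in> Jset phi Sg; length as = length G;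
         \<forall>k < length G. HasType (as ! k)
             (subst_ty (sub_of (take k (OV G)) (take k as)) (snd (G ! k))) D \<in> Jset phi Sg \<rbrakk>
       \<Longrightarrow> IsType D (Ty S (map ((!) as) is)) \<in> Jset phi Sg"
| R5: "\<lbrakk> FD Sg f = Some (G, is, U);
         Ctx D \<in> Jset phi Sg; Ctx G \<in> Jset phi Sg; length as = length G;
         \<forall>k < length G. HasType (as ! k)
             (subst_ty (sub_of (take k (OV G)) (take k as)) (snd (G ! k))) D \<in> Jset phi Sg;
         IsType D (subst_ty (sub_of (OV G) as) U) \<in> Jset phi Sg \<rbrakk>
       \<Longrightarrow> HasType (App f (map ((!) as) is)) (subst_ty (sub_of (OV G) as) U) D \<in> Jset phi Sg"

text \<open>as : D \<rightarrow> G in J(Sigma).\<close>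
definition smor :: "('v set \<Rightarrow> 'v set) \<Rightarrow> ('v, 'f, 't) sig \<Rightarrow> ('v, 'f, 't) ctx \<Rightarrow>
    ('v, 'f, 't) ctx \<Rightarrow> ('v, 'f) ptm list \<Rightarrow> bool" where
  "smor phi Sg D G as \<longleftrightarrow> Ctx D \<in> Jset phi Sg \<and> Ctx G \<in> Jset phi Sg \<and> length as = length G \<and>
     (\<forall>k < length G. HasType (as ! k)
        (subst_ty (sub_of (take k (OV G)) (take k as)) (snd (G ! k))) D \<in> Jset phi Sg)"

definition is_signature :: "('v set \<Rightarrow> 'v set) \<Rightarrow> ('v, 'f, 't) sig \<Rightarrow> bool" where
  "is_signature phi Sg \<longleftrightarrow>
     (\<forall>S G is. TD Sg S = Some (G, is) \<longrightarrow> Ctx G \<in> Jset phi Sg \<and> determining G is) \<and>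
     (\<forall>f G is U. FD Sg f = Some (G, is, U) \<longrightarrow> Ctx G \<in> Jset phi Sg \<and> determining G is \<and>
        vars_ty U \<subseteq> ctxV G \<and> IsType G U \<in> Jset phi Sg)"

definition sig_standard :: "('v, 'f, 't) sig \<Rightarrow> bool" where
  "sig_standard Sg \<longleftrightarrow>
     (\<forall>S G is. TD Sg S = Some (G, is) \<longrightarrow> is = [0..<length G]) \<and>
     (\<forall>f G is U. FD Sg f = Some (G, is, U) \<longrightarrow> is = [0..<length G])"

section \<open>Categories with families\<close>

record ('o, 'm, 'ty, 'tm) cwf =
  Ob :: "'o set"
  Hom :: "'o \<Rightarrow> 'o \<Rightarrow> 'm set"
  comp :: "'m \<Rightarrow> 'm \<Rightarrow> 'm"   \<comment> \<open>comp g f = g \<circ> f\<close>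
  idm :: "'o \<Rightarrow> 'm"
  trm :: "'o"
  Tys :: "'o \<Rightarrow> 'ty set"
  tsub :: "'ty \<Rightarrow> 'm \<Rightarrow> 'ty"
  Tms :: "'o \<Rightarrow> 'ty \<Rightarrow> 'tm set"
  msub :: "'tm \<Rightarrow> 'm \<Rightarrow> 'tm"
  ext :: "'o \<Rightarrow> 'ty \<Rightarrow> 'o"
  prj :: "'o \<Rightarrow> 'ty \<Rightarrow> 'm"
  vr :: "'o \<Rightarrow> 'ty \<Rightarrow> 'tm"
  pair :: "'o \<Rightarrow> 'ty \<Rightarrow> 'm \<Rightarrow> 'tm \<Rightarrow> 'm"

definition is_cwf :: "('o, 'm, 'ty, 'tm) cwf \<Rightarrow> bool" where
  "is_cwf C \<longleftrightarrow>
    \<comment> \<open>category\<close>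
    (\<forall>X Y f. f \<in> Hom C X Y \<longrightarrow> X \<in> Ob C \<and> Y \<in> Ob C) \<and>
    (\<forall>X\<in>Ob C. idm C X \<in> Hom C X X) \<and>
    (\<forall>X Y Z f g. f \<in> Hom C X Y \<longrightarrow> g \<in> Hom C Y Z \<longrightarrow> comp C g f \<in> Hom C X Z) \<and>
    (\<forall>X Y f. f \<in> Hom C X Y \<longrightarrow> comp C f (idm C X) = f \<and> comp C (idm C Y) f = f) \<and>
    (\<forall>W X Y Z f g h. f \<in> Hom C W X \<longrightarrow> g \<in> Hom C X Y \<longrightarrow> h \<in> Hom C Y Z \<longrightarrow>
        comp C h (comp C g f) = comp C (comp C h g) f) \<and>
    \<comment> \<open>terminal object\<close>
    trm C \<in> Ob C \<and> (\<forall>X\<in>Ob C. \<exists>!f. f \<in> Hom C X (trm C)) \<and>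
    \<comment> \<open>types\<close>
    (\<forall>X Y A f. A \<in> Tys C Y \<longrightarrow> f \<in> Hom C X Y \<longrightarrow> tsub C A f \<in> Tys C X) \<and>
    (\<forall>X\<in>Ob C. \<forall>A\<in>Tys C X. tsub C A (idm C X) = A) \<and>
    (\<forall>X Y Z A f g. A \<in> Tys C Z \<longrightarrow> f \<in> Hom C X Y \<longrightarrow> g \<in> Hom C Y Z \<longrightarrow>
        tsub C A (comp C g f) = tsub C (tsub C A g) f) \<and>
    \<comment> \<open>terms\<close>
    (\<forall>X Y A a f. a \<in> Tms C Y A \<longrightarrow> f \<in> Hom C X Y \<longrightarrow> msub C a f \<in> Tms C X (tsub C A f)) \<and>
    (\<forall>X\<in>Ob C. \<forall>A\<in>Tys C X. \<forall>a\<in>Tms C X A. msub C a (idm C X) = a) \<and>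
    (\<forall>X Y Z A a f g. A \<in> Tys C Z \<longrightarrow> a \<in> Tms C Z A \<longrightarrow> f \<in> Hom C X Y \<longrightarrow> g \<in> Hom C Y Z \<longrightarrow>
        msub C a (comp C g f) = msub C (msub C a g) f) \<and>
    \<comment> \<open>context extension\<close>
    (\<forall>X\<in>Ob C. \<forall>A\<in>Tys C X. ext C X A \<in> Ob C \<and> prj C X A \<in> Hom C (ext C X A) X \<and>
        vr C X A \<in> Tms C (ext C X A) (tsub C A (prj C X A))) \<and>
    (\<forall>X Y A f a. A \<in> Tys C Y \<longrightarrow> f \<in> Hom C X Y \<longrightarrow> a \<in> Tms C X (tsub C A f) \<longrightarrow>
        pair C Y A f a \<in> Hom C X (ext C Y A) \<and>
        comp C (prj C Y A) (pair C Y A f a) = f \<and>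
        msub C (vr C Y A) (pair C Y A f a) = a) \<and>
    (\<forall>X Y A h. A \<in> Tys C Y \<longrightarrow> h \<in> Hom C X (ext C Y A) \<longrightarrow>
        pair C Y A (comp C (prj C Y A) h) (msub C (vr C Y A) h) = h) \<and>
    (\<forall>W X Y A f a g. A \<in> Tys C Y \<longrightarrow> f \<in> Hom C X Y \<longrightarrow> a \<in> Tms C X (tsub C A f) \<longrightarrow>
        g \<in> Hom C W X \<longrightarrow>
        comp C (pair C Y A f a) g = pair C Y A (comp C f g) (msub C a g))"

text \<open>f.A = <f \<circ> p(A{f}), v_(A{f})>_A : Delta.A{f} \<rightarrow> Gamma.A, for f : Delta \<rightarrow> Gamma.\<close>
definition qmor :: "('o, 'm, 'ty, 'tm) cwf \<Rightarrow> 'o \<Rightarrow> 'o \<Rightarrow> 'm \<Rightarrow> 'ty \<Rightarrow> 'm" where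
  "qmor C D G f A = pair C G A (comp C f (prj C D (tsub C A f))) (vr C D (tsub C A f))"

definition is_terminal :: "('o, 'm, 'ty, 'tm) cwf \<Rightarrow> 'o \<Rightarrow> bool" where
  "is_terminal C T \<longleftrightarrow> T \<in> Ob C \<and> (\<forall>X\<in>Ob C. \<exists>!f. f \<in> Hom C X T)"

definition is_cwf_mor :: "('o, 'm, 'ty, 'tm) cwf \<Rightarrow> ('o2, 'm2, 'ty2, 'tm2) cwf \<Rightarrow>
    ('o \<Rightarrow> 'o2) \<Rightarrow> ('m \<Rightarrow> 'm2) \<Rightarrow> ('o \<Rightarrow> 'ty \<Rightarrow> 'ty2) \<Rightarrow> ('o \<Rightarrow> 'ty \<Rightarrow> 'tm \<Rightarrow> 'tm2) \<Rightarrow> bool" where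
  "is_cwf_mor C C' Fo Fm sg th \<longleftrightarrow>
    \<comment> \<open>functor\<close>
    (\<forall>X\<in>Ob C. Fo X \<in> Ob C') \<and>
    (\<forall>X Y f. f \<in> Hom C X Y \<longrightarrow> Fm f \<in> Hom C' (Fo X) (Fo Y)) \<and>
    (\<forall>X\<in>Ob C. Fm (idm C X) = idm C' (Fo X)) \<and>
    (\<forall>X Y Z f g. f \<in> Hom C X Y \<longrightarrow> g \<in> Hom C Y Z \<longrightarrow> Fm (comp C g f) = comp C' (Fm g) (Fm f)) \<and>
    \<comment> \<open>preserves the terminal object\<close>
    is_terminal C' (Fo (trm C)) \<and>
    \<comment> \<open>types\<close>
    (\<forall>X\<in>Ob C. \<forall>A\<in>Tys C X. sg X A \<in> Tys C' (Fo X)) \<and>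
    (\<forall>X Y A f. A \<in> Tys C Y \<longrightarrow> f \<in> Hom C X Y \<longrightarrow> sg X (tsub C A f) = tsub C' (sg Y A) (Fm f)) \<and>
    (\<forall>X\<in>Ob C. \<forall>A\<in>Tys C X. Fo (ext C X A) = ext C' (Fo X) (sg X A) \<and>
        Fm (prj C X A) = prj C' (Fo X) (sg X A)) \<and>
    \<comment> \<open>terms\<close>
    (\<forall>X\<in>Ob C. \<forall>A\<in>Tys C X. \<forall>a\<in>Tms C X A. th X A a \<in> Tms C' (Fo X) (sg X A)) \<and>
    (\<forall>X Y A a f. A \<in> Tys C Y \<longrightarrow> a \<in> Tms C Y A \<longrightarrow> f \<in> Hom C X Y \<longrightarrow>
        th X (tsub C A f) (msub C a f) = msub C' (th Y A a) (Fm f)) \<and>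
    (\<forall>X\<in>Ob C. \<forall>A\<in>Tys C X.
        th (ext C X A) (tsub C A (prj C X A)) (vr C X A) = vr C' (Fo X) (sg X A)) \<and>
    (\<forall>X Y A f a. A \<in> Tys C Y \<longrightarrow> f \<in> Hom C X Y \<longrightarrow> a \<in> Tms C X (tsub C A f) \<longrightarrow>
        Fm (pair C Y A f a) = pair C' (Fo Y) (sg Y A) (Fm f) (th X (tsub C A f) a))"

section \<open>The cwf F_Sigma\<close>

type_synonym ('v, 'f, 't) smorph = "('v, 'f, 't) ctx \<times> ('v, 'f, 't) ctx \<times> ('v, 'f) ptm list"

definition FSig :: "('v set \<Rightarrow> 'v set) \<Rightarrow> ('v set \<Rightarrow> 'v) \<Rightarrow> ('v, 'f, 't) sig \<Rightarrow>
   (('v, 'f, 't) ctx, ('v, 'f, 't) smorph, ('v, 'f, 't) ctx \<times> ('v, 'f, 't) pty,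
    (('v, 'f, 't) ctx \<times> ('v, 'f, 't) pty) \<times> ('v, 'f) ptm) cwf" where
  "FSig phi fr Sg = \<lparr>
     Ob = {G. Ctx G \<in> Jset phi Sg},
     Hom = (\<lambda>D G. {(D, G, as) | as. smor phi Sg D G as}),
     comp = (\<lambda>(D, G, as) (T, D', bs). (T, G, map (subst_tm (sub_of (OV D') bs)) as)),
     idm = (\<lambda>G. (G, G, map Var (OV G))),
     trm = [],
     Tys = (\<lambda>G. {(G, A) | A. IsType G A \<in> Jset phi Sg}),
     tsub = (\<lambda>(G', A) (D, G, as). (D, subst_ty (sub_of (OV G) as) A)),
     Tms = (\<lambda>G T. {(T, a) | a. fst T = G \<and> HasType a (snd T) G \<in> Jset phi Sg}),
     msub = (\<lambda>((G', A), a) (D, G, as).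
               ((D, subst_ty (sub_of (OV G) as) A), subst_tm (sub_of (OV G) as) a)),
     ext = (\<lambda>G (G', S). G @ [(fr (ctxV G), S)]),
     prj = (\<lambda>G (G', S). (G @ [(fr (ctxV G), S)], G, map Var (OV G))),
     vr = (\<lambda>G (G', S). ((G @ [(fr (ctxV G), S)], S), Var (fr (ctxV G)))),
     pair = (\<lambda>G (G', S) (D, G'', ss) (T, b). (D, G @ [(fr (ctxV G), S)], ss @ [b]))
   \<rparr>"

section \<open>Heyting prealgebras and hyperdoctrines\<close>

definition is_heyting :: "'a set \<Rightarrow> ('a \<Rightarrow> 'a \<Rightarrow> bool) \<Rightarrow> 'a \<Rightarrow> 'a \<Rightarrow>
    ('a \<Rightarrow> 'a \<Rightarrow> 'a) \<Rightarrow> ('a \<Rightarrow> 'a \<Rightarrow> 'a) \<Rightarrow> ('a \<Rightarrow> 'a \<Rightarrow> 'a) \<Rightarrow> bool" where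
  "is_heyting X le tp bt mt jn im \<longleftrightarrow>
     (\<forall>x\<in>X. le x x) \<and> (\<forall>x\<in>X. \<forall>y\<in>X. \<forall>z\<in>X. le x y \<longrightarrow> le y z \<longrightarrow> le x z) \<and>
     tp \<in> X \<and> bt \<in> X \<and>
     (\<forall>x\<in>X. \<forall>y\<in>X. mt x y \<in> X \<and> jn x y \<in> X \<and> im x y \<in> X) \<and>
     (\<forall>x\<in>X. le bt x \<and> le x tp) \<and>
     (\<forall>x\<in>X. \<forall>y\<in>X. \<forall>z\<in>X. (le z (mt x y) \<longleftrightarrow> le z x \<and> le z y) \<and>
        (le (jn x y) z \<longleftrightarrow> le x z \<and> le y z) \<and>
        (le z (im x y) \<longleftrightarrow> le (mt z x) y))"

definition is_heyting_mor :: "'a set \<Rightarrow> ('a \<Rightarrow> 'a \<Rightarrow> bool) \<Rightarrow> 'a \<Rightarrow> 'a \<Rightarrow>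
    ('a \<Rightarrow> 'a \<Rightarrow> 'a) \<Rightarrow> ('a \<Rightarrow> 'a \<Rightarrow> 'a) \<Rightarrow> ('a \<Rightarrow> 'a \<Rightarrow> 'a) \<Rightarrow>
    'b set \<Rightarrow> ('b \<Rightarrow> 'b \<Rightarrow> bool) \<Rightarrow> 'b \<Rightarrow> 'b \<Rightarrow>
    ('b \<Rightarrow> 'b \<Rightarrow> 'b) \<Rightarrow> ('b \<Rightarrow> 'b \<Rightarrow> 'b) \<Rightarrow> ('b \<Rightarrow> 'b \<Rightarrow> 'b) \<Rightarrow> ('a \<Rightarrow> 'b) \<Rightarrow> bool" where
  "is_heyting_mor X le tp bt mt jn im X' le' tp' bt' mt' jn' im' h \<longleftrightarrow>
     (\<forall>x\<in>X. h x \<in> X') \<and>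
     (\<forall>x\<in>X. \<forall>y\<in>X. le x y \<longrightarrow> le' (h x) (h y)) \<and>
     h tp = tp' \<and> h bt = bt' \<and>
     (\<forall>x\<in>X. \<forall>y\<in>X. h (mt x y) = mt' (h x) (h y) \<and> h (jn x y) = jn' (h x) (h y) \<and>
        h (im x y) = im' (h x) (h y))"

record ('o, 'm, 'ty, 'pr) hdoc =
  Pr :: "'o \<Rightarrow> 'pr set"
  ple :: "'o \<Rightarrow> 'pr \<Rightarrow> 'pr \<Rightarrow> bool"
  ptop :: "'o \<Rightarrow> 'pr"
  pbot :: "'o \<Rightarrow> 'pr"
  pmeet :: "'o \<Rightarrow> 'pr \<Rightarrow> 'pr \<Rightarrow> 'pr"
  pjoin :: "'o \<Rightarrow> 'pr \<Rightarrow> 'pr \<Rightarrow> 'pr"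
  pimp :: "'o \<Rightarrow> 'pr \<Rightarrow> 'pr \<Rightarrow> 'pr"
  psub :: "'m \<Rightarrow> 'pr \<Rightarrow> 'pr"
  pall :: "'o \<Rightarrow> 'ty \<Rightarrow> 'pr \<Rightarrow> 'pr"
  pex :: "'o \<Rightarrow> 'ty \<Rightarrow> 'pr \<Rightarrow> 'pr"

abbreviation heyting_at :: "('o, 'm, 'ty, 'pr) hdoc \<Rightarrow> 'o \<Rightarrow> bool" where
  "heyting_at H X \<equiv> is_heyting (Pr H X) (ple H X) (ptop H X) (pbot H X)
     (pmeet H X) (pjoin H X) (pimp H X)"

definition is_hdoc :: "('o, 'm, 'ty, 'tm) cwf \<Rightarrow> ('o, 'm, 'ty, 'pr) hdoc \<Rightarrow> bool" where
  "is_hdoc C H \<longleftrightarrow>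
    (\<forall>X\<in>Ob C. heyting_at H X) \<and>
    (\<forall>X Y f. f \<in> Hom C X Y \<longrightarrow>
       is_heyting_mor (Pr H Y) (ple H Y) (ptop H Y) (pbot H Y) (pmeet H Y) (pjoin H Y) (pimp H Y)
         (Pr H X) (ple H X) (ptop H X) (pbot H X) (pmeet H X) (pjoin H X) (pimp H X) (psub H f)) \<and>
    (\<forall>X\<in>Ob C. \<forall>R\<in>Pr H X. psub H (idm C X) R = R) \<and>
    (\<forall>X Y Z f g. f \<in> Hom C X Y \<longrightarrow> g \<in> Hom C Y Z \<longrightarrow>
       (\<forall>R\<in>Pr H Z. psub H (comp C g f) R = psub H f (psub H g R))) \<and>
    (\<forall>X\<in>Ob C. \<forall>S\<in>Tys C X.
       (\<forall>R\<in>Pr H (ext C X S). pall H X S R \<in> Pr H X \<and> pex H X S R \<in> Pr H X) \<and>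
       (\<forall>R\<in>Pr H (ext C X S). \<forall>R'\<in>Pr H (ext C X S). ple H (ext C X S) R R' \<longrightarrow>
          ple H X (pall H X S R) (pall H X S R') \<and> ple H X (pex H X S R) (pex H X S R')) \<and>
       (\<forall>Q\<in>Pr H X. \<forall>R\<in>Pr H (ext C X S).
          (ple H X Q (pall H X S R) \<longleftrightarrow> ple H (ext C X S) (psub H (prj C X S) Q) R) \<and>
          (ple H X (pex H X S R) Q \<longleftrightarrow> ple H (ext C X S) R (psub H (prj C X S) Q)))) \<and>
    (\<forall>X Y S f. S \<in> Tys C Y \<longrightarrow> f \<in> Hom C X Y \<longrightarrow> (\<forall>R\<in>Pr H (ext C Y S).
       psub H f (pall H Y S R) = pall H X (tsub C S f) (psub H (qmor C X Y f S) R) \<and>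
       psub H f (pex H Y S R) = pex H X (tsub C S f) (psub H (qmor C X Y f S) R)))"

definition is_Fbased_mor :: "('o, 'm, 'ty, 'tm) cwf \<Rightarrow> ('o, 'm, 'ty, 'pr) hdoc \<Rightarrow>
    ('o2, 'm2, 'ty2, 'tm2) cwf \<Rightarrow> ('o2, 'm2, 'ty2, 'pr2) hdoc \<Rightarrow>
    ('o \<Rightarrow> 'o2) \<Rightarrow> ('m \<Rightarrow> 'm2) \<Rightarrow> ('o \<Rightarrow> 'ty \<Rightarrow> 'ty2) \<Rightarrow> ('o \<Rightarrow> 'pr \<Rightarrow> 'pr2) \<Rightarrow> bool" where
  "is_Fbased_mor C H C' H' Fo Fm sg G \<longleftrightarrow>
    (\<forall>X\<in>Ob C. is_heyting_mor (Pr H X) (ple H X) (ptop H X) (pbot H X) (pmeet H X) (pjoin H X) (pimp H X)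
       (Pr H' (Fo X)) (ple H' (Fo X)) (ptop H' (Fo X)) (pbot H' (Fo X)) (pmeet H' (Fo X))
       (pjoin H' (Fo X)) (pimp H' (Fo X)) (G X)) \<and>
    (\<forall>X Y f. f \<in> Hom C X Y \<longrightarrow> (\<forall>R\<in>Pr H Y. G X (psub H f R) = psub H' (Fm f) (G Y R))) \<and>
    (\<forall>X\<in>Ob C. \<forall>S\<in>Tys C X. \<forall>R\<in>Pr H (ext C X S).
       G X (pall H X S R) = pall H' (Fo X) (sg X S) (G (ext C X S) R) \<and>
       G X (pex H X S R) = pex H' (Fo X) (sg X S) (G (ext C X S) R))"

section \<open>Formulas, theorems, and the Lindenbaum-Tarski hyperdoctrine\<close>

datatype ('v, 'f, 't, 'p) form =
    Pred 'p "('v, 'f) ptm list"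
  | FBot | FTop
  | Conj "('v, 'f, 't, 'p) form" "('v, 'f, 't, 'p) form"
  | Disj "('v, 'f, 't, 'p) form" "('v, 'f, 't, 'p) form"
  | Imp "('v, 'f, 't, 'p) form" "('v, 'f, 't, 'p) form"
  | All 'v "('v, 'f, 't) pty" "('v, 'f, 't, 'p) form"
  | Ex 'v "('v, 'f, 't) pty" "('v, 'f, 't, 'p) form"

type_synonym ('v, 'f, 't, 'p) psig = "'p \<Rightarrow> (('v, 'f, 't) ctx \<times> nat list) option"

definition is_pred_sig :: "('v set \<Rightarrow> 'v set) \<Rightarrow> ('v, 'f, 't) sig \<Rightarrow> ('v, 'f, 't, 'p) psig \<Rightarrow> bool" where
  "is_pred_sig phi Sg Ps \<longleftrightarrow>
     (\<forall>R G is. Ps R = Some (G, is) \<longrightarrow> Ctx G \<in> Jset phi Sg \<and> determining G is)"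

definition pred_standard :: "('v, 'f, 't, 'p) psig \<Rightarrow> bool" where
  "pred_standard Ps \<longleftrightarrow> (\<forall>R G is. Ps R = Some (G, is) \<longrightarrow> is = [0..<length G])"

inductive_set Form :: "('v set \<Rightarrow> 'v set) \<Rightarrow> ('v, 'f, 't) sig \<Rightarrow> ('v, 'f, 't, 'p) psig \<Rightarrow>
    (('v, 'f, 't) ctx \<times> ('v, 'f, 't, 'p) form) set"
  for phi Sg Ps where
  atom: "\<lbrakk> Ps R = Some (G, is); smor phi Sg D G as \<rbrakk> \<Longrightarrow> (D, Pred R (map ((!) as) is)) \<in> Form phi Sg Ps"
| bot: "Ctx G \<in> Jset phi Sg \<Longrightarrow> (G, FBot) \<in> Form phi Sg Ps"
| top: "Ctx G \<in> Jset phi Sg \<Longrightarrow> (G, FTop) \<in> Form phi Sg Ps"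
| conj: "\<lbrakk> (G, a) \<in> Form phi Sg Ps; (G, b) \<in> Form phi Sg Ps \<rbrakk> \<Longrightarrow> (G, Conj a b) \<in> Form phi Sg Ps"
| disj: "\<lbrakk> (G, a) \<in> Form phi Sg Ps; (G, b) \<in> Form phi Sg Ps \<rbrakk> \<Longrightarrow> (G, Disj a b) \<in> Form phi Sg Ps"
| imp: "\<lbrakk> (G, a) \<in> Form phi Sg Ps; (G, b) \<in> Form phi Sg Ps \<rbrakk> \<Longrightarrow> (G, Imp a b) \<in> Form phi Sg Ps"
| all: "\<lbrakk> (G @ [(x, A)], a) \<in> Form phi Sg Ps; IsType G A \<in> Jset phi Sg \<rbrakk> \<Longrightarrow> (G, All x A a) \<in> Form phi Sg Ps"
| ex: "\<lbrakk> (G @ [(x, A)], a) \<in> Form phi Sg Ps; IsType G A \<in> Jset phi Sg \<rbrakk> \<Longrightarrow> (G, Ex x A a) \<in> Form phi Sg Ps"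

primrec fsub :: "('v set \<Rightarrow> 'v) \<Rightarrow> ('v, 'f, 't) ctx \<Rightarrow> ('v, 'f, 't) ctx \<Rightarrow> ('v, 'f) ptm list \<Rightarrow>
    ('v, 'f, 't, 'p) form \<Rightarrow> ('v, 'f, 't, 'p) form" where
  "fsub fr D G as (Pred R ts) = Pred R (map (subst_tm (sub_of (OV G) as)) ts)"
| "fsub fr D G as FBot = FBot"
| "fsub fr D G as FTop = FTop"
| "fsub fr D G as (Conj a b) = Conj (fsub fr D G as a) (fsub fr D G as b)"
| "fsub fr D G as (Disj a b) = Disj (fsub fr D G as a) (fsub fr D G as b)"
| "fsub fr D G as (Imp a b) = Imp (fsub fr D G as a) (fsub fr D G as b)"
| "fsub fr D G as (All x A a) =
     (let y = fr (ctxV D); A' = subst_ty (sub_of (OV G) as) A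
      in All y A' (fsub fr (D @ [(y, A')]) (G @ [(x, A)]) (as @ [Var y]) a))"
| "fsub fr D G as (Ex x A a) =
     (let y = fr (ctxV D); A' = subst_ty (sub_of (OV G) as) A
      in Ex y A' (fsub fr (D @ [(y, A')]) (G @ [(x, A)]) (as @ [Var y]) a))"

abbreviation wk :: "('v set \<Rightarrow> 'v) \<Rightarrow> ('v, 'f, 't) ctx \<Rightarrow> 'v \<Rightarrow> ('v, 'f, 't) pty \<Rightarrow>
    ('v, 'f, 't, 'p) form \<Rightarrow> ('v, 'f, 't, 'p) form" where
  "wk fr G x A a \<equiv> fsub fr (G @ [(x, A)]) G (map Var (OV G)) a"

type_synonym ('v, 'f, 't, 'p) sequent =
  "('v, 'f, 't) ctx \<times> ('v, 'f, 't, 'p) form \<times> ('v, 'f, 't, 'p) form"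

definition is_seq :: "('v set \<Rightarrow> 'v set) \<Rightarrow> ('v, 'f, 't) sig \<Rightarrow> ('v, 'f, 't, 'p) psig \<Rightarrow>
    ('v, 'f, 't, 'p) sequent \<Rightarrow> bool" where
  "is_seq phi Sg Ps s \<longleftrightarrow> (case s of (G, a, b) \<Rightarrow> (G, a) \<in> Form phi Sg Ps \<and> (G, b) \<in> Form phi Sg Ps)"

inductive_set Thm :: "('v set \<Rightarrow> 'v set) \<Rightarrow> ('v set \<Rightarrow> 'v) \<Rightarrow> ('v, 'f, 't) sig \<Rightarrow> ('v, 'f, 't, 'p) psig \<Rightarrow>
    ('v, 'f, 't, 'p) sequent set \<Rightarrow> ('v, 'f, 't, 'p) sequent set"
  for phi fr Sg Ps T where
  ax: "\<lbrakk> s \<in> T; is_seq phi Sg Ps s \<rbrakk> \<Longrightarrow> s \<in> Thm phi fr Sg Ps T"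
| idt: "is_seq phi Sg Ps (G, a, a) \<Longrightarrow> (G, a, a) \<in> Thm phi fr Sg Ps T"
| cut: "\<lbrakk> (G, a, b) \<in> Thm phi fr Sg Ps T; (G, b, c) \<in> Thm phi fr Sg Ps T; is_seq phi Sg Ps (G, a, c) \<rbrakk>
        \<Longrightarrow> (G, a, c) \<in> Thm phi fr Sg Ps T"
| conjE1: "is_seq phi Sg Ps (G, Conj a b, a) \<Longrightarrow> (G, Conj a b, a) \<in> Thm phi fr Sg Ps T"
| conjE2: "is_seq phi Sg Ps (G, Conj a b, b) \<Longrightarrow> (G, Conj a b, b) \<in> Thm phi fr Sg Ps T"
| conjI: "\<lbrakk> (G, c, a) \<in> Thm phi fr Sg Ps T; (G, c, b) \<in> Thm phi fr Sg Ps T; is_seq phi Sg Ps (G, c, Conj a b) \<rbrakk>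
        \<Longrightarrow> (G, c, Conj a b) \<in> Thm phi fr Sg Ps T"
| topI: "is_seq phi Sg Ps (G, c, FTop) \<Longrightarrow> (G, c, FTop) \<in> Thm phi fr Sg Ps T"
| disjI1: "is_seq phi Sg Ps (G, a, Disj a b) \<Longrightarrow> (G, a, Disj a b) \<in> Thm phi fr Sg Ps T"
| disjI2: "is_seq phi Sg Ps (G, b, Disj a b) \<Longrightarrow> (G, b, Disj a b) \<in> Thm phi fr Sg Ps T"
| disjE: "\<lbrakk> (G, a, c) \<in> Thm phi fr Sg Ps T; (G, b, c) \<in> Thm phi fr Sg Ps T; is_seq phi Sg Ps (G, Disj a b, c) \<rbrakk>
        \<Longrightarrow> (G, Disj a b, c) \<in> Thm phi fr Sg Ps T"
| botE: "is_seq phi Sg Ps (G, FBot, c) \<Longrightarrow> (G, FBot, c) \<in> Thm phi fr Sg Ps T"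
| impI: "\<lbrakk> (G, Conj a b, c) \<in> Thm phi fr Sg Ps T; is_seq phi Sg Ps (G, a, Imp b c) \<rbrakk>
        \<Longrightarrow> (G, a, Imp b c) \<in> Thm phi fr Sg Ps T"
| impE: "\<lbrakk> (G, a, Imp b c) \<in> Thm phi fr Sg Ps T; is_seq phi Sg Ps (G, Conj a b, c) \<rbrakk>
        \<Longrightarrow> (G, Conj a b, c) \<in> Thm phi fr Sg Ps T"
| allI: "\<lbrakk> (G @ [(x, A)], wk fr G x A a, b) \<in> Thm phi fr Sg Ps T; is_seq phi Sg Ps (G, a, All x A b) \<rbrakk>
        \<Longrightarrow> (G, a, All x A b) \<in> Thm phi fr Sg Ps T"
| allE: "\<lbrakk> (G, a, All x A b) \<in> Thm phi fr Sg Ps T; is_seq phi Sg Ps (G @ [(x, A)], wk fr G x A a, b) \<rbrakk>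
        \<Longrightarrow> (G @ [(x, A)], wk fr G x A a, b) \<in> Thm phi fr Sg Ps T"
| exE: "\<lbrakk> (G @ [(x, A)], b, wk fr G x A a) \<in> Thm phi fr Sg Ps T; is_seq phi Sg Ps (G, Ex x A b, a) \<rbrakk>
        \<Longrightarrow> (G, Ex x A b, a) \<in> Thm phi fr Sg Ps T"
| exI: "\<lbrakk> (G, Ex x A b, a) \<in> Thm phi fr Sg Ps T; is_seq phi Sg Ps (G @ [(x, A)], b, wk fr G x A a) \<rbrakk>
        \<Longrightarrow> (G @ [(x, A)], b, wk fr G x A a) \<in> Thm phi fr Sg Ps T"
| subst: "\<lbrakk> (G, a, b) \<in> Thm phi fr Sg Ps T; smor phi Sg D G as;
           is_seq phi Sg Ps (D, fsub fr D G as a, fsub fr D G as b) \<rbrakk>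
        \<Longrightarrow> (D, fsub fr D G as a, fsub fr D G as b) \<in> Thm phi fr Sg Ps T"

definition LT :: "('v set \<Rightarrow> 'v set) \<Rightarrow> ('v set \<Rightarrow> 'v) \<Rightarrow> ('v, 'f, 't) sig \<Rightarrow> ('v, 'f, 't, 'p) psig \<Rightarrow>
    ('v, 'f, 't, 'p) sequent set \<Rightarrow>
    (('v, 'f, 't) ctx, ('v, 'f, 't) smorph, ('v, 'f, 't) ctx \<times> ('v, 'f, 't) pty,
     ('v, 'f, 't) ctx \<times> ('v, 'f, 't, 'p) form) hdoc" where
  "LT phi fr Sg Ps T = \<lparr>
     Pr = (\<lambda>G. {(G, a) | a. (G, a) \<in> Form phi Sg Ps}),
     ple = (\<lambda>G (G1, a) (G2, b). (G, a, b) \<in> Thm phi fr Sg Ps T),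
     ptop = (\<lambda>G. (G, FTop)),
     pbot = (\<lambda>G. (G, FBot)),
     pmeet = (\<lambda>G (G1, a) (G2, b). (G, Conj a b)),
     pjoin = (\<lambda>G (G1, a) (G2, b). (G, Disj a b)),
     pimp = (\<lambda>G (G1, a) (G2, b). (G, Imp a b)),
     psub = (\<lambda>(D, G, as) (G', a). (D, fsub fr D G as a)),
     pall = (\<lambda>G (G', A) (GA, b). (G, All (fst (last GA)) A b)),
     pex = (\<lambda>G (G', A) (GA, b). (G, Ex (fst (last GA)) A b))
   \<rparr>"

end

theory Submission
  imports Defs
begin


lemma finite_vars_tm: "finite (vars_tm t)"
  by (induction t) auto

lemma finite_vars_ty: "finite (vars_ty A)"
  by (cases A) (auto simp: finite_vars_tm)

lemma finite_ctxV: "finite (ctxV G)"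
  by (auto simp: ctxV_def finite_vars_ty)

lemma OV_ctxV: "set (OV G) \<subseteq> ctxV G"
  by (auto simp: ctxV_def)

lemma subst_tm_cong: "(\<And>v. v \<in> vars_tm t \<Longrightarrow> s v = s' v) \<Longrightarrow> subst_tm s t = subst_tm s' t"
  by (induction t) auto

lemma subst_ty_cong: "(\<And>v. v \<in> vars_ty A \<Longrightarrow> s v = s' v) \<Longrightarrow> subst_ty s A = subst_ty s' A"
  by (cases A) (auto intro: subst_tm_cong)

lemma subst_tm_Var[simp]: "subst_tm Var t = t"
  by (induction t) (auto simp: map_idI)

lemma map_subst_tm_Var[simp]: "map (subst_tm Var) ts = ts"
  by (induction ts) auto

lemma subst_ty_Var[simp]: "subst_ty Var A = A"
  by (cases A) auto

lemma subst_tm_comp: "subst_tm s (subst_tm s' t) = subst_tm (subst_tm s \<circ> s') t"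
  by (induction t) auto

lemma subst_ty_comp: "subst_ty s (subst_ty s' A) = subst_ty (subst_tm s \<circ> s') A"
  by (cases A) (auto simp: subst_tm_comp)

lemma sub_of_Var[simp]: "sub_of xs (map Var xs) = Var"
proof
  fix v show "sub_of xs (map Var xs) v = Var v"
    by (induction xs) (auto simp: sub_of_def)
qed

lemma sub_of_map: "length xs = length bs \<Longrightarrow> v \<in> set xs \<Longrightarrow>
   subst_tm \<sigma> (sub_of xs bs v) = sub_of xs (map (subst_tm \<sigma>) bs) v"
proof (induction xs arbitrary: bs)
  case Nil then show ?case by simp
next
  case (Cons x xs) then show ?case
    by (cases bs) (auto simp: sub_of_def)
qed

lemma sub_of_nth: "distinct xs \<Longrightarrow> length xs = length as \<Longrightarrow> i < length xs \<Longrightarrow> sub_of xs as (xs!i) = as!i"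
  by (simp add: sub_of_def map_of_zip_nth)

lemma sub_of_take: "distinct xs \<Longrightarrow> length xs = length as \<Longrightarrow> v \<in> set (take k xs) \<Longrightarrow>
   sub_of (take k xs) (take k as) v = sub_of xs as v"
proof -
  assume d: "distinct xs" and l: "length xs = length as" and v: "v \<in> set (take k xs)"
  then obtain j where j: "j < length (take k xs)" "v = take k xs ! j" by (auto simp: in_set_conv_nth)
  have "sub_of (take k xs) (take k as) v = take k as ! j"
    unfolding j(2) using j(1) d l by (intro sub_of_nth) auto
  also have "\<dots> = as ! j" using j l by simp
  also have "\<dots> = sub_of xs as v" using j d l by (simp add: sub_of_nth)
  finally show ?thesis .
qed

lemma map_sub_of: "distinct xs \<Longrightarrow> length xs = length as \<Longrightarrow> map (sub_of xs as) xs = as"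
  by (rule nth_equalityI) (auto simp: sub_of_nth)

definition wfj :: "('v set \<Rightarrow> 'v set) \<Rightarrow> ('v, 'f, 't) sig \<Rightarrow> ('v, 'f, 't) judg \<Rightarrow> bool" where
  "wfj phi Sg J = (case J of
     Ctx G \<Rightarrow> distinct (OV G) \<and> (\<forall>k<length G. vars_ty (snd (G!k)) \<subseteq> set (take k (OV G)))
   | IsType G A \<Rightarrow> vars_ty A \<subseteq> set (OV G) \<and> Ctx G \<in> Jset phi Sg
   | HasType a A G \<Rightarrow> vars_tm a \<subseteq> set (OV G) \<and> Ctx G \<in> Jset phi Sg)"

lemma Jset_wfj:
  assumes vs: "varsys phi fr" and sig: "is_signature phi Sg"
  shows "J \<in> Jset phi Sg \<Longrightarrow> wfj phi Sg J"
proof (induction rule: Jset.induct)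
  case R1 then show ?case by (simp add: wfj_def)
next
  case (R2 G A x)
  have "phi (ctxV G) \<subseteq> - ctxV G" using vs finite_ctxV[of G] unfolding varsys_def by simp
  then have x: "x \<notin> set (OV G)" using \<open>x \<in> phi (ctxV G)\<close> OV_ctxV[of G] by blast
  have d: "distinct (OV G)" and h: "\<forall>k<length G. vars_ty (snd (G!k)) \<subseteq> set (take k (OV G))"
    and a: "vars_ty A \<subseteq> set (OV G)"
    using R2.IH by (auto simp: wfj_def)
  have "vars_ty (snd ((G @ [(x, A)])!k)) \<subseteq> set (take k (OV (G @ [(x, A)])))"
    if k: "k < length (G @ [(x, A)])" for k
  proof (cases "k < length G")
    case True then show ?thesis using h by (simp add: nth_append)
  next
    case False then have "k = length G" using k by simp
    then show ?thesis using a by simp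
  qed
  then show ?case using d x by (simp add: wfj_def)
next
  case (R3 G i) then show ?case by (auto simp: wfj_def)
next
  case (R4 S G "is" D as)
  have "vars_tm (as!i) \<subseteq> set (OV D)" if "i \<in> set is" for i
  proof -
    have "i < length G" using that R4(1) sig by (auto simp: is_signature_def determining_def)
    then show ?thesis using R4.prems R4.IH R4.hyps by (simp add: wfj_def)
  qed
  then show ?case using R4.hyps by (auto simp: wfj_def)
next
  case (R5 f G "is" U D as)
  have "vars_tm (as!i) \<subseteq> set (OV D)" if "i \<in> set is" for i
  proof -
    have "i < length G" using that R5(1) sig by (auto simp: is_signature_def determining_def)
    then show ?thesis using R5.prems R5.IH R5.hyps by (simp add: wfj_def)
  qed
  then show ?case using R5.hyps by (auto simp: wfj_def)
qed

context
  fixes phi :: "'v set \<Rightarrow> 'v set" and fr :: "'v set \<Rightarrow> 'v" and Sg :: "('v, 'f, 't) sig"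
  assumes vs: "varsys phi fr" and sig: "is_signature phi Sg"
begin

lemma ctx_distinct: "Ctx G \<in> Jset phi Sg \<Longrightarrow> distinct (OV G)"
  using Jset_wfj[OF vs sig] by (fastforce simp: wfj_def)

lemma ctx_vars: "Ctx G \<in> Jset phi Sg \<Longrightarrow> k < length G \<Longrightarrow> vars_ty (snd (G!k)) \<subseteq> set (take k (OV G))"
  using Jset_wfj[OF vs sig] by (fastforce simp: wfj_def)

lemma type_vars: "IsType G A \<in> Jset phi Sg \<Longrightarrow> vars_ty A \<subseteq> set (OV G)"
  using Jset_wfj[OF vs sig] by (fastforce simp: wfj_def)

lemma type_ctx: "IsType G A \<in> Jset phi Sg \<Longrightarrow> Ctx G \<in> Jset phi Sg"
  using Jset_wfj[OF vs sig] by (fastforce simp: wfj_def)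

lemma tm_vars: "HasType a A G \<in> Jset phi Sg \<Longrightarrow> vars_tm a \<subseteq> set (OV G)"
  using Jset_wfj[OF vs sig] by (fastforce simp: wfj_def)

lemma tm_ctx: "HasType a A G \<in> Jset phi Sg \<Longrightarrow> Ctx G \<in> Jset phi Sg"
  using Jset_wfj[OF vs sig] by (fastforce simp: wfj_def)

end

lemma ctx_snoc_inv: "Ctx (G @ [(x, A)]) \<in> Jset phi Sg \<Longrightarrow>
   Ctx G \<in> Jset phi Sg \<and> IsType G A \<in> Jset phi Sg \<and> x \<in> phi (ctxV G)"
  by (erule Jset.cases) auto

lemma ctx_snoc_I: "varsys phi fr \<Longrightarrow> Ctx G \<in> Jset phi Sg \<Longrightarrow> IsType G A \<in> Jset phi Sg \<Longrightarrow>
   Ctx (G @ [(fr (ctxV G), A)]) \<in> Jset phi Sg"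
  by (rule R2) (auto simp: varsys_def finite_ctxV)

definition wkP :: "('v set \<Rightarrow> 'v set) \<Rightarrow> ('v, 'f, 't) sig \<Rightarrow> 'v \<Rightarrow> ('v, 'f, 't) pty \<Rightarrow> ('v, 'f, 't) judg \<Rightarrow> bool" where
  "wkP phi Sg y C J = (case J of Ctx _ \<Rightarrow> True
    | IsType G A \<Rightarrow> (Ctx (G @ [(y, C)]) \<in> Jset phi Sg \<longrightarrow> IsType (G @ [(y, C)]) A \<in> Jset phi Sg)
    | HasType a A G \<Rightarrow> (Ctx (G @ [(y, C)]) \<in> Jset phi Sg \<longrightarrow> HasType a A (G @ [(y, C)]) \<in> Jset phi Sg))"

lemma Jset_wkP: "J \<in> Jset phi Sg \<Longrightarrow> wkP phi Sg y C J"
proof (induction rule: Jset.induct)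
  case (R3 G i)
  show ?case unfolding wkP_def judg.case
  proof (intro HOL.impI)
    assume c: "Ctx (G @ [(y, C)]) \<in> Jset phi Sg"
    have "HasType (Var (fst ((G @ [(y, C)]) ! i))) (snd ((G @ [(y, C)]) ! i)) (G @ [(y, C)]) \<in> Jset phi Sg"
      using c R3 by (intro Jset.R3) auto
    then show "HasType (Var (fst (G ! i))) (snd (G ! i)) (G @ [(y, C)]) \<in> Jset phi Sg"
      using R3 by (simp add: nth_append)
  qed
next
  case (R4 S G "is" D as)
  then show ?case unfolding wkP_def by (auto intro!: Jset.R4)
next
  case (R5 f G "is" U D as)
  then show ?case unfolding wkP_def by (auto intro!: Jset.R5)
qed (auto simp: wkP_def)

lemma type_wk: "IsType G A \<in> Jset phi Sg \<Longrightarrow> Ctx (G @ [(y, C)]) \<in> Jset phi Sg \<Longrightarrow> IsType (G @ [(y, C)]) A \<in> Jset phi Sg"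
  using Jset_wkP[of "IsType G A" phi Sg y C] by (simp add: wkP_def)

lemma tm_wk: "HasType a A G \<in> Jset phi Sg \<Longrightarrow> Ctx (G @ [(y, C)]) \<in> Jset phi Sg \<Longrightarrow> HasType a A (G @ [(y, C)]) \<in> Jset phi Sg"
  using Jset_wkP[of "HasType a A G" phi Sg y C] by (simp add: wkP_def)

lemma subst_ty_sub_of: "length xs = length bs \<Longrightarrow> vars_ty A \<subseteq> set xs \<Longrightarrow>
  subst_ty \<sigma> (subst_ty (sub_of xs bs) A) = subst_ty (sub_of xs (map (subst_tm \<sigma>) bs)) A"
  unfolding subst_ty_comp by (rule subst_ty_cong) (auto simp: sub_of_map)


definition subP :: "('v set \<Rightarrow> 'v set) \<Rightarrow> ('v, 'f, 't) sig \<Rightarrow> ('v, 'f, 't) judg \<Rightarrow> bool" where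
  "subP phi Sg J = (case J of Ctx _ \<Rightarrow> True
    | IsType G B \<Rightarrow> (\<forall>D as. smor phi Sg D G as \<longrightarrow> IsType D (subst_ty (sub_of (OV G) as) B) \<in> Jset phi Sg)
    | HasType b B G \<Rightarrow> (\<forall>D as. smor phi Sg D G as \<longrightarrow>
        HasType (subst_tm (sub_of (OV G) as) b) (subst_ty (sub_of (OV G) as) B) D \<in> Jset phi Sg))"

context
  fixes phi :: "'v set \<Rightarrow> 'v set" and fr :: "'v set \<Rightarrow> 'v" and Sg :: "('v, 'f, 't) sig"
  assumes vs: "varsys phi fr" and sig: "is_signature phi Sg"
begin

lemma subst_args:
  assumes TDi: "\<forall>i\<in>set is. i < length bs"
  shows "map (subst_tm \<sigma>) (map ((!) bs) is) = map ((!) (map (subst_tm \<sigma>) bs)) is"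
  using TDi by auto

lemma Jset_subP: "J \<in> Jset phi Sg \<Longrightarrow> subP phi Sg J"
proof (induction rule: Jset.induct)
  case (R3 G i)
  show ?case unfolding subP_def judg.case
  proof (intro HOL.allI HOL.impI)
    fix D as assume sm: "smor phi Sg D G as"
    have l: "length as = length G" using sm by (simp add: smor_def)
    have d: "distinct (OV G)" using ctx_distinct[OF vs sig R3(1)] .
    have h: "HasType (as ! i) (subst_ty (sub_of (take i (OV G)) (take i as)) (snd (G ! i))) D \<in> Jset phi Sg"
      using sm R3(2) by (simp add: smor_def)
    have e1: "subst_tm (sub_of (OV G) as) (Var (fst (G ! i))) = as ! i"
      using sub_of_nth[OF d, of as i] l R3(2) by simp
    have e2: "subst_ty (sub_of (OV G) as) (snd (G ! i)) = subst_ty (sub_of (take i (OV G)) (take i as)) (snd (G ! i))"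
      apply (rule subst_ty_cong)
      using ctx_vars[OF vs sig R3(1) R3(2)] sub_of_take[OF d, of as] l by auto
    show "HasType (subst_tm (sub_of (OV G) as) (Var (fst (G ! i)))) (subst_ty (sub_of (OV G) as) (snd (G ! i))) D \<in> Jset phi Sg"
      using h e1 e2 by simp
  qed
next
  case (R4 S G "is" D' bs)
  show ?case unfolding subP_def judg.case
  proof (intro HOL.allI HOL.impI)
    fix D as assume sm: "smor phi Sg D D' as"
    let ?s = "sub_of (OV D') as"
    let ?cs = "map (subst_tm ?s) bs"
    have isl: "\<forall>i\<in>set is. i < length bs" using R4.hyps sig
      by (auto simp: is_signature_def determining_def)
    have X: "IsType D (Ty S (map ((!) ?cs) is)) \<in> Jset phi Sg"
    proof (rule Jset.R4[where G=G])
      show "TD Sg S = Some (G, is)" "Ctx G \<in> Jset phi Sg" "length ?cs = length G" using R4.hyps by auto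
      show "Ctx D \<in> Jset phi Sg" using sm by (simp add: smor_def)
      show "\<forall>k<length G. HasType (?cs ! k) (subst_ty (sub_of (take k (OV G)) (take k ?cs)) (snd (G ! k))) D \<in> Jset phi Sg"
      proof (intro HOL.allI HOL.impI)
        fix k assume k: "k < length G"
        have "HasType (subst_tm ?s (bs ! k)) (subst_ty ?s (subst_ty (sub_of (take k (OV G)) (take k bs)) (snd (G ! k)))) D \<in> Jset phi Sg"
          using R4.IH k sm by (simp add: subP_def)
        moreover have "subst_ty ?s (subst_ty (sub_of (take k (OV G)) (take k bs)) (snd (G ! k)))
           = subst_ty (sub_of (take k (OV G)) (take k ?cs)) (snd (G ! k))"
          using subst_ty_sub_of[of "take k (OV G)" "take k bs" "snd (G!k)" ?s]
            ctx_vars[OF vs sig _ k] R4.hyps by (simp add: take_map)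
        ultimately show "HasType (?cs ! k) (subst_ty (sub_of (take k (OV G)) (take k ?cs)) (snd (G ! k))) D \<in> Jset phi Sg"
          using k R4.hyps by simp
      qed
    qed
    have eq: "map (subst_tm ?s \<circ> (!) bs) is = map ((!) ?cs) is"
      using isl by (intro map_cong) auto
    show "IsType D (subst_ty ?s (Ty S (map ((!) bs) is))) \<in> Jset phi Sg"
      by (simp only: subst_ty.simps map_map eq X)
  qed
next
  case (R5 f G "is" U D' bs)
  show ?case unfolding subP_def judg.case
  proof (intro HOL.allI HOL.impI)
    fix D as assume sm: "smor phi Sg D D' as"
    let ?s = "sub_of (OV D') as"
    let ?cs = "map (subst_tm ?s) bs"
    have isl: "\<forall>i\<in>set is. i < length bs" using R5.hyps sig
      by (auto simp: is_signature_def determining_def)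
    have "IsType G U \<in> Jset phi Sg" using \<open>FD Sg f = Some (G, is, U)\<close> sig
      by (auto simp: is_signature_def)
    then have Uv: "vars_ty U \<subseteq> set (OV G)" by (rule type_vars[OF vs sig])
    have eU: "subst_ty ?s (subst_ty (sub_of (OV G) bs) U) = subst_ty (sub_of (OV G) ?cs) U"
      using subst_ty_sub_of[of "OV G" bs U ?s] Uv R5.hyps by simp
    have X: "HasType (App f (map ((!) ?cs) is)) (subst_ty (sub_of (OV G) ?cs) U) D \<in> Jset phi Sg"
    proof (rule Jset.R5[where G=G])
      show "FD Sg f = Some (G, is, U)" "Ctx G \<in> Jset phi Sg" "length ?cs = length G" using R5.hyps by auto
      show "Ctx D \<in> Jset phi Sg" using sm by (simp add: smor_def)
      show "\<forall>k<length G. HasType (?cs ! k) (subst_ty (sub_of (take k (OV G)) (take k ?cs)) (snd (G ! k))) D \<in> Jset phi Sg"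
      proof (intro HOL.allI HOL.impI)
        fix k assume k: "k < length G"
        have "HasType (subst_tm ?s (bs ! k)) (subst_ty ?s (subst_ty (sub_of (take k (OV G)) (take k bs)) (snd (G ! k)))) D \<in> Jset phi Sg"
          using R5.IH k sm by (simp add: subP_def)
        moreover have "subst_ty ?s (subst_ty (sub_of (take k (OV G)) (take k bs)) (snd (G ! k)))
           = subst_ty (sub_of (take k (OV G)) (take k ?cs)) (snd (G ! k))"
          using subst_ty_sub_of[of "take k (OV G)" "take k bs" "snd (G!k)" ?s]
            ctx_vars[OF vs sig _ k] R5.hyps by (simp add: take_map)
        ultimately show "HasType (?cs ! k) (subst_ty (sub_of (take k (OV G)) (take k ?cs)) (snd (G ! k))) D \<in> Jset phi Sg"
          using k R5.hyps by simp
      qed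
      have "IsType D (subst_ty ?s (subst_ty (sub_of (OV G) bs) U)) \<in> Jset phi Sg"
        using R5.IH sm by (simp add: subP_def)
      then show "IsType D (subst_ty (sub_of (OV G) ?cs) U) \<in> Jset phi Sg"
        by (simp only: eU)
    qed
    have eq: "map (subst_tm ?s \<circ> (!) bs) is = map ((!) ?cs) is"
      using isl by (intro map_cong) auto
    show "HasType (subst_tm ?s (App f (map ((!) bs) is))) (subst_ty ?s (subst_ty (sub_of (OV G) bs) U)) D \<in> Jset phi Sg"
      by (simp only: subst_tm.simps map_map eq eU X)
  qed
qed (auto simp: subP_def)

lemma type_subst: "IsType G B \<in> Jset phi Sg \<Longrightarrow> smor phi Sg D G as \<Longrightarrow> IsType D (subst_ty (sub_of (OV G) as) B) \<in> Jset phi Sg"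
  using Jset_subP[of "IsType G B"] by (simp add: subP_def)

lemma smor_id: "Ctx G \<in> Jset phi Sg \<Longrightarrow> smor phi Sg G G (map Var (OV G))"
  unfolding smor_def
proof (intro HOL.conjI HOL.allI HOL.impI)
  fix k assume c: "Ctx G \<in> Jset phi Sg" and k: "k < length G"
  have "HasType (Var (fst (G ! k))) (snd (G ! k)) G \<in> Jset phi Sg" using c k by (rule Jset.R3)
  moreover have e: "sub_of (take k (OV G)) (take k (map Var (OV G))) = Var" by (simp only: take_map sub_of_Var)
  ultimately show "HasType (map Var (OV G) ! k) (subst_ty (sub_of (take k (OV G)) (take k (map Var (OV G)))) (snd (G ! k))) G \<in> Jset phi Sg"
    unfolding e subst_ty_Var using k by simp
qed auto

lemma smor_wk: "smor phi Sg D G as \<Longrightarrow> Ctx (D @ [(y, C)]) \<in> Jset phi Sg \<Longrightarrow> smor phi Sg (D @ [(y, C)]) G as"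
  unfolding smor_def by (auto intro: tm_wk)

lemma smor_prj: "Ctx (G @ [(y, C)]) \<in> Jset phi Sg \<Longrightarrow> smor phi Sg (G @ [(y, C)]) G (map Var (OV G))"
proof -
  assume "Ctx (G @ [(y, C)]) \<in> Jset phi Sg"
  moreover then have "Ctx G \<in> Jset phi Sg" using ctx_snoc_inv[of G y C phi Sg] by simp
  ultimately show ?thesis using smor_wk[OF smor_id] by simp
qed

lemma smor_ext:
  assumes sm: "smor phi Sg D G as" and cG: "Ctx (G @ [(x, A)]) \<in> Jset phi Sg"
    and cD: "Ctx (D @ [(y, subst_ty (sub_of (OV G) as) A)]) \<in> Jset phi Sg"
  shows "smor phi Sg (D @ [(y, subst_ty (sub_of (OV G) as) A)]) (G @ [(x, A)]) (as @ [Var y])"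
  unfolding smor_def
proof (intro HOL.conjI HOL.allI HOL.impI)
  let ?D = "D @ [(y, subst_ty (sub_of (OV G) as) A)]"
  have l: "length as = length G" using sm by (simp add: smor_def)
  show "Ctx ?D \<in> Jset phi Sg" "Ctx (G @ [(x, A)]) \<in> Jset phi Sg" using cD cG by auto
  show "length (as @ [Var y]) = length (G @ [(x, A)])" using l by simp
  fix k assume k: "k < length (G @ [(x, A)])"
  show "HasType ((as @ [Var y]) ! k) (subst_ty (sub_of (take k (OV (G @ [(x, A)]))) (take k (as @ [Var y]))) (snd ((G @ [(x, A)]) ! k))) ?D \<in> Jset phi Sg"
  proof (cases "k < length G")
    case True
    then show ?thesis using smor_wk[OF sm cD] l by (simp add: smor_def nth_append)
  next
    case False
    then have kk: "k = length G" using k by simp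
    have "HasType (Var (fst (?D ! length D))) (snd (?D ! length D)) ?D \<in> Jset phi Sg"
      using cD by (intro Jset.R3) auto
    moreover have "(as @ [Var y]) ! k = Var y" "(G @ [(x, A)]) ! k = (x, A)"
      "take k (OV (G @ [(x, A)])) = OV G" "take k (as @ [Var y]) = as"
      using kk l by (auto simp: nth_append)
    ultimately show ?thesis by simp
  qed
qed

end




lemma sub_of_Var2[simp]: "sub_of (map fst X) (map (Var \<circ> fst) X) = Var"
  using sub_of_Var[of "map fst X"] by (simp only: map_map)

lemma form_ctx: "(G, a) \<in> Form phi Sg Ps \<Longrightarrow> Ctx G \<in> Jset phi Sg"
  by (induction rule: Form.induct) (auto simp: smor_def dest: ctx_snoc_inv)

lemma thm_seq: "s \<in> Thm phi fr Sg Ps T \<Longrightarrow> is_seq phi Sg Ps s"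
  by (erule Thm.cases) auto

lemma ctx_snoc_var: "debruijn phi fr \<Longrightarrow> Ctx (G @ [(x, A)]) \<in> Jset phi Sg \<Longrightarrow> x = fr (ctxV G)"
  using ctx_snoc_inv[of G x A phi Sg] finite_ctxV[of G] by (auto simp: debruijn_def)

inductive_cases FormConjE: "(G, Conj a b) \<in> Form phi Sg Ps"
inductive_cases FormDisjE: "(G, Disj a b) \<in> Form phi Sg Ps"
inductive_cases FormImpE: "(G, Imp a b) \<in> Form phi Sg Ps"
inductive_cases FormAllE: "(G, All x A a) \<in> Form phi Sg Ps"
inductive_cases FormExE: "(G, Ex x A a) \<in> Form phi Sg Ps"

primrec Intp :: "('v, 'f, 't, 'p) psig \<Rightarrow> (('v, 'f, 't) ctx \<Rightarrow> 'o) \<Rightarrow> (('v, 'f, 't) smorph \<Rightarrow> 'm) \<Rightarrow>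
   (('v, 'f, 't) ctx \<Rightarrow> ('v, 'f, 't) ctx \<times> ('v, 'f, 't) pty \<Rightarrow> 'ty) \<Rightarrow> ('o, 'm, 'ty, 'pr) hdoc \<Rightarrow>
   ('p \<Rightarrow> 'pr) \<Rightarrow> ('v, 'f, 't) ctx \<Rightarrow> ('v, 'f, 't, 'p) form \<Rightarrow> 'pr" where
  "Intp Ps Fo Fm sg D Rs G (Pred R ts) = psub D (Fm (G, fst (the (Ps R)), ts)) (Rs R)"
| "Intp Ps Fo Fm sg D Rs G FBot = pbot D (Fo G)"
| "Intp Ps Fo Fm sg D Rs G FTop = ptop D (Fo G)"
| "Intp Ps Fo Fm sg D Rs G (Conj a b) = pmeet D (Fo G) (Intp Ps Fo Fm sg D Rs G a) (Intp Ps Fo Fm sg D Rs G b)"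
| "Intp Ps Fo Fm sg D Rs G (Disj a b) = pjoin D (Fo G) (Intp Ps Fo Fm sg D Rs G a) (Intp Ps Fo Fm sg D Rs G b)"
| "Intp Ps Fo Fm sg D Rs G (Imp a b) = pimp D (Fo G) (Intp Ps Fo Fm sg D Rs G a) (Intp Ps Fo Fm sg D Rs G b)"
| "Intp Ps Fo Fm sg D Rs G (All x A a) = pall D (Fo G) (sg G (G, A)) (Intp Ps Fo Fm sg D Rs (G @ [(x, A)]) a)"
| "Intp Ps Fo Fm sg D Rs G (Ex x A a) = pex D (Fo G) (sg G (G, A)) (Intp Ps Fo Fm sg D Rs (G @ [(x, A)]) a)"

context
  fixes X le tp bt mt jn im
  assumes h: "is_heyting X le tp bt mt jn im"
begin
lemma hrefl: "x \<in> X \<Longrightarrow> le x x" using h by (simp add: is_heyting_def)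
lemma htrans: "x \<in> X \<Longrightarrow> y \<in> X \<Longrightarrow> z \<in> X \<Longrightarrow> le x y \<Longrightarrow> le y z \<Longrightarrow> le x z"
  using h unfolding is_heyting_def by blast
lemma hclos: "x \<in> X \<Longrightarrow> y \<in> X \<Longrightarrow> mt x y \<in> X \<and> jn x y \<in> X \<and> im x y \<in> X"
  using h unfolding is_heyting_def by blast
lemma hmeet: "x \<in> X \<Longrightarrow> y \<in> X \<Longrightarrow> z \<in> X \<Longrightarrow> le z (mt x y) \<longleftrightarrow> le z x \<and> le z y"
  using h unfolding is_heyting_def by blast
lemma hjoin: "x \<in> X \<Longrightarrow> y \<in> X \<Longrightarrow> z \<in> X \<Longrightarrow> le (jn x y) z \<longleftrightarrow> le x z \<and> le y z"
  using h unfolding is_heyting_def by blast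
lemma himp: "x \<in> X \<Longrightarrow> y \<in> X \<Longrightarrow> z \<in> X \<Longrightarrow> le z (im x y) \<longleftrightarrow> le (mt z x) y"
  using h unfolding is_heyting_def by blast
lemma htop: "x \<in> X \<Longrightarrow> le x tp" using h by (simp add: is_heyting_def)
lemma hbot: "x \<in> X \<Longrightarrow> le bt x" using h by (simp add: is_heyting_def)
lemma hmeetE1: "x \<in> X \<Longrightarrow> y \<in> X \<Longrightarrow> le (mt x y) x"
  using hmeet[of x y "mt x y"] hrefl hclos by blast
lemma hmeetE2: "x \<in> X \<Longrightarrow> y \<in> X \<Longrightarrow> le (mt x y) y"
  using hmeet[of x y "mt x y"] hrefl hclos by blast
lemma hjoinI1: "x \<in> X \<Longrightarrow> y \<in> X \<Longrightarrow> le x (jn x y)"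
  using hjoin[of x y "jn x y"] hrefl hclos by blast
lemma hjoinI2: "x \<in> X \<Longrightarrow> y \<in> X \<Longrightarrow> le y (jn x y)"
  using hjoin[of x y "jn x y"] hrefl hclos by blast
end

lemma map_subst_Var: "map (subst_tm s) (map Var xs) = map s xs"
  by (induction xs) auto

lemma subst_comp_Var: "subst_tm s \<circ> (Var \<circ> f) = s \<circ> f"
  by (auto simp: fun_eq_iff)

locale LL =
  fixes phi :: "'v set \<Rightarrow> 'v set" and fr :: "'v set \<Rightarrow> 'v"
    and Sg :: "('v, 'f, 't) sig"
    and Ps :: "('v, 'f, 't, 'p) psig"
    and C :: "('o, 'm, 'ty, 'tm) cwf"
    and Fo :: "('v, 'f, 't) ctx \<Rightarrow> 'o"
    and Fm :: "('v, 'f, 't) smorph \<Rightarrow> 'm"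
    and sg :: "('v, 'f, 't) ctx \<Rightarrow> ('v, 'f, 't) ctx \<times> ('v, 'f, 't) pty \<Rightarrow> 'ty"
    and th :: "('v, 'f, 't) ctx \<Rightarrow> ('v, 'f, 't) ctx \<times> ('v, 'f, 't) pty \<Rightarrow>
               (('v, 'f, 't) ctx \<times> ('v, 'f, 't) pty) \<times> ('v, 'f) ptm \<Rightarrow> 'tm"
    and D :: "('o, 'm, 'ty, 'pr) hdoc"
    and Rstar :: "'p \<Rightarrow> 'pr"
  assumes vs: "varsys phi fr" and db: "debruijn phi fr"
    and sig: "is_signature phi Sg"
    and cwfm: "is_cwf_mor (FSig phi fr Sg) C Fo Fm sg th"
    and psig: "is_pred_sig phi Sg Ps" and pstd: "pred_standard Ps"
    and hd: "is_hdoc C D"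
    and rst: "\<forall>R G is. Ps R = Some (G, is) \<longrightarrow> Rstar R \<in> Pr D (Fo G)"
begin

abbreviation "FS \<equiv> FSig phi fr Sg"
abbreviation "J \<equiv> Jset phi Sg"
abbreviation "I \<equiv> Intp Ps Fo Fm sg D Rstar"

lemma Fo_ob: "Ctx X \<in> J \<Longrightarrow> Fo X \<in> Ob C"
  using cwfm by (simp add: is_cwf_mor_def FSig_def)

lemma Fm_hom: "smor phi Sg X Y as \<Longrightarrow> Fm (X, Y, as) \<in> Hom C (Fo X) (Fo Y)"
  using cwfm unfolding is_cwf_mor_def by (auto simp: FSig_def)

lemma Fm_comp: "smor phi Sg X Y as \<Longrightarrow> smor phi Sg Y Z bs \<Longrightarrow>
   Fm (X, Z, map (subst_tm (sub_of (OV Y) as)) bs) = comp C (Fm (Y, Z, bs)) (Fm (X, Y, as))"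
proof -
  assume a: "smor phi Sg X Y as" "smor phi Sg Y Z bs"
  have "Fm (comp FS (Y, Z, bs) (X, Y, as)) = comp C (Fm (Y, Z, bs)) (Fm (X, Y, as))"
    using cwfm a unfolding is_cwf_mor_def by (auto simp: FSig_def)
  then show ?thesis by (simp add: FSig_def)
qed

lemma Fm_id: "Ctx X \<in> J \<Longrightarrow> Fm (X, X, map Var (OV X)) = idm C (Fo X)"
  using cwfm unfolding is_cwf_mor_def by (auto simp: FSig_def)

lemma sg_ty: "IsType X A \<in> J \<Longrightarrow> sg X (X, A) \<in> Tys C (Fo X)"
  using cwfm type_ctx[OF vs sig] unfolding is_cwf_mor_def by (auto simp: FSig_def)

lemma sg_sub: "IsType Y A \<in> J \<Longrightarrow> smor phi Sg X Y as \<Longrightarrow>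
  sg X (X, subst_ty (sub_of (OV Y) as) A) = tsub C (sg Y (Y, A)) (Fm (X, Y, as))"
proof -
  assume a: "IsType Y A \<in> J" "smor phi Sg X Y as"
  have "sg X (tsub FS (Y, A) (X, Y, as)) = tsub C (sg Y (Y, A)) (Fm (X, Y, as))"
    using cwfm a unfolding is_cwf_mor_def by (auto simp: FSig_def)
  then show ?thesis by (simp add: FSig_def)
qed

lemma Fo_ext: "IsType X A \<in> J \<Longrightarrow> Fo (X @ [(fr (ctxV X), A)]) = ext C (Fo X) (sg X (X, A))"
proof -
  assume a: "IsType X A \<in> J"
  have "Fo (ext FS X (X, A)) = ext C (Fo X) (sg X (X, A))"
    using cwfm a type_ctx[OF vs sig a] unfolding is_cwf_mor_def by (auto simp: FSig_def)
  then show ?thesis by (simp add: FSig_def)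
qed

lemma Fm_prj: "IsType X A \<in> J \<Longrightarrow> Fm (X @ [(fr (ctxV X), A)], X, map Var (OV X)) = prj C (Fo X) (sg X (X, A))"
proof -
  assume a: "IsType X A \<in> J"
  have "Fm (prj FS X (X, A)) = prj C (Fo X) (sg X (X, A))"
    using cwfm a type_ctx[OF vs sig a] unfolding is_cwf_mor_def by (auto simp: FSig_def)
  then show ?thesis by (simp add: FSig_def)
qed

lemma th_vr: "IsType X A \<in> J \<Longrightarrow>
  th (X @ [(fr (ctxV X), A)]) (X @ [(fr (ctxV X), A)], A) ((X @ [(fr (ctxV X), A)], A), Var (fr (ctxV X)))
   = vr C (Fo X) (sg X (X, A))"
proof -
  assume a: "IsType X A \<in> J"
  have "th (ext FS X (X, A)) (tsub FS (X, A) (prj FS X (X, A))) (vr FS X (X, A)) = vr C (Fo X) (sg X (X, A))"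
    using cwfm a type_ctx[OF vs sig a] unfolding is_cwf_mor_def by (auto simp: FSig_def)
  then show ?thesis by (simp add: FSig_def)
qed

lemma Fm_pair: "IsType Y A \<in> J \<Longrightarrow> smor phi Sg X Y as \<Longrightarrow>
  HasType b (subst_ty (sub_of (OV Y) as) A) X \<in> J \<Longrightarrow>
  Fm (X, Y @ [(fr (ctxV Y), A)], as @ [b]) =
   pair C (Fo Y) (sg Y (Y, A)) (Fm (X, Y, as)) (th X (X, subst_ty (sub_of (OV Y) as) A) ((X, subst_ty (sub_of (OV Y) as) A), b))"
proof -
  assume a: "IsType Y A \<in> J" "smor phi Sg X Y as" "HasType b (subst_ty (sub_of (OV Y) as) A) X \<in> J"
  have "Fm (pair FS Y (Y, A) (X, Y, as) ((X, subst_ty (sub_of (OV Y) as) A), b)) =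
     pair C (Fo Y) (sg Y (Y, A)) (Fm (X, Y, as)) (th X (tsub FS (Y, A) (X, Y, as)) ((X, subst_ty (sub_of (OV Y) as) A), b))"
    using cwfm a unfolding is_cwf_mor_def by (auto simp: FSig_def)
  then show ?thesis by (simp add: FSig_def)
qed


lemmas smor_wk' = smor_wk[OF vs sig] and smor_prj' = smor_prj[OF vs sig] and smor_id' = smor_id[OF vs sig]
  and smor_ext' = smor_ext[OF vs sig] and type_subst' = type_subst[OF vs sig]
  and type_ctx' = type_ctx[OF vs sig] and ctx_distinct' = ctx_distinct[OF vs sig]
  and tm_vars' = tm_vars[OF vs sig] and type_vars' = type_vars[OF vs sig]

lemma ctx_snoc_I': "Ctx G \<in> J \<Longrightarrow> IsType G A \<in> J \<Longrightarrow> Ctx (G @ [(fr (ctxV G), A)]) \<in> J"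
  by (rule ctx_snoc_I[OF vs])

lemma hd_heyting: "X \<in> Ob C \<Longrightarrow> heyting_at D X"
  using hd by (simp add: is_hdoc_def)

lemma hd_mor: "f \<in> Hom C X Y \<Longrightarrow>
  is_heyting_mor (Pr D Y) (ple D Y) (ptop D Y) (pbot D Y) (pmeet D Y) (pjoin D Y) (pimp D Y)
         (Pr D X) (ple D X) (ptop D X) (pbot D X) (pmeet D X) (pjoin D X) (pimp D X) (psub D f)"
  using hd by (simp add: is_hdoc_def)

lemma hd_id: "X \<in> Ob C \<Longrightarrow> R \<in> Pr D X \<Longrightarrow> psub D (idm C X) R = R"
  using hd by (simp add: is_hdoc_def)

lemma hd_comp: "f \<in> Hom C X Y \<Longrightarrow> g \<in> Hom C Y Z \<Longrightarrow> R \<in> Pr D Z \<Longrightarrow> psub D (comp C g f) R = psub D f (psub D g R)"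
  using hd unfolding is_hdoc_def by blast

lemma hd_quant: "X \<in> Ob C \<Longrightarrow> S \<in> Tys C X \<Longrightarrow> R \<in> Pr D (ext C X S) \<Longrightarrow>
   pall D X S R \<in> Pr D X \<and> pex D X S R \<in> Pr D X"
  using hd unfolding is_hdoc_def by blast

lemma hd_all_adj: "X \<in> Ob C \<Longrightarrow> S \<in> Tys C X \<Longrightarrow> Q \<in> Pr D X \<Longrightarrow> R \<in> Pr D (ext C X S) \<Longrightarrow>
   ple D X Q (pall D X S R) \<longleftrightarrow> ple D (ext C X S) (psub D (prj C X S) Q) R"
  using hd unfolding is_hdoc_def by blast

lemma hd_ex_adj: "X \<in> Ob C \<Longrightarrow> S \<in> Tys C X \<Longrightarrow> Q \<in> Pr D X \<Longrightarrow> R \<in> Pr D (ext C X S) \<Longrightarrow>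
   ple D X (pex D X S R) Q \<longleftrightarrow> ple D (ext C X S) R (psub D (prj C X S) Q)"
  using hd unfolding is_hdoc_def by blast

lemma hd_bc: "S \<in> Tys C Y \<Longrightarrow> f \<in> Hom C X Y \<Longrightarrow> R \<in> Pr D (ext C Y S) \<Longrightarrow>
       psub D f (pall D Y S R) = pall D X (tsub C S f) (psub D (qmor C X Y f S) R) \<and>
       psub D f (pex D Y S R) = pex D X (tsub C S f) (psub D (qmor C X Y f S) R)"
  using hd unfolding is_hdoc_def by blast

lemma qmor_Fm:
  assumes tA: "IsType G A \<in> J" and sm: "smor phi Sg D' G as"
    and tA': "IsType D' (subst_ty (sub_of (OV G) as) A) \<in> J"
  shows "qmor C (Fo D') (Fo G) (Fm (D', G, as)) (sg G (G, A)) =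
    Fm (D' @ [(fr (ctxV D'), subst_ty (sub_of (OV G) as) A)], G @ [(fr (ctxV G), A)], as @ [Var (fr (ctxV D'))])"
proof -
  define A' where "A' = subst_ty (sub_of (OV G) as) A"
  define y where "y = fr (ctxV D')"
  define E where "E = D' @ [(y, A')]"
  have cD: "Ctx D' \<in> J" using sm by (simp add: smor_def)
  have cE: "Ctx E \<in> J" unfolding E_def y_def A'_def using ctx_snoc_I'[OF cD tA'] .
  have t: "tsub C (sg G (G, A)) (Fm (D', G, as)) = sg D' (D', A')"
    using sg_sub[OF tA sm] by (simp add: A'_def)
  have p: "prj C (Fo D') (sg D' (D', A')) = Fm (E, D', map Var (OV D'))"
    using Fm_prj[of D' A'] tA' by (simp add: E_def y_def A'_def)
  have smp: "smor phi Sg E D' (map Var (OV D'))" using smor_prj'[OF cE[unfolded E_def]] by (simp add: E_def)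
  have smE: "smor phi Sg E G as" using smor_wk'[OF sm cE[unfolded E_def]] by (simp add: E_def)
  have c: "comp C (Fm (D', G, as)) (Fm (E, D', map Var (OV D'))) = Fm (E, G, as)"
    using Fm_comp[OF smp sm] by simp
  have v: "vr C (Fo D') (sg D' (D', A')) = th E (E, A') ((E, A'), Var y)"
    using th_vr[of D' A'] tA' by (simp add: E_def y_def A'_def)
  have hy: "HasType (Var y) A' E \<in> J"
  proof -
    have "HasType (Var (fst (E ! length D'))) (snd (E ! length D')) E \<in> J"
      using cE by (intro Jset.R3) (auto simp: E_def)
    then show ?thesis by (simp add: E_def)
  qed
  have "Fm (E, G @ [(fr (ctxV G), A)], as @ [Var y]) =
     pair C (Fo G) (sg G (G, A)) (Fm (E, G, as)) (th E (E, A') ((E, A'), Var y))"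
    using Fm_pair[OF tA smE] hy by (simp add: A'_def)
  then show ?thesis
    unfolding qmor_def t p c v by (simp add: E_def y_def A'_def)
qed


lemma pred_args: "Ps R = Some (GR, is) \<Longrightarrow> length as = length GR \<Longrightarrow> map ((!) as) is = as"
proof -
  assume a: "Ps R = Some (GR, is)" "length as = length GR"
  then have "is = [0..<length as]" using pstd unfolding pred_standard_def by auto
  then show ?thesis by (simp add: map_nth)
qed

lemma I_Pr: "(G, a) \<in> Form phi Sg Ps \<Longrightarrow> I G a \<in> Pr D (Fo G)"
proof (induction rule: Form.induct)
  case (atom R GR "is" D' as)
  have l: "length as = length GR" using atom by (simp add: smor_def)
  have "Rstar R \<in> Pr D (Fo GR)" using rst atom by blast
  then show ?case using hd_mor[OF Fm_hom[OF atom(2)]] pred_args[OF atom(1) l] atom(1)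
    by (simp add: is_heyting_mor_def)
next
  case (bot G) then show ?case using hd_heyting[OF Fo_ob] by (simp add: is_heyting_def)
next
  case (top G) then show ?case using hd_heyting[OF Fo_ob] by (simp add: is_heyting_def)
next
  case (conj G a b)
  have h: "heyting_at D (Fo G)" by (rule hd_heyting[OF Fo_ob[OF form_ctx[OF conj(1)]]])
  then show ?case using conj.IH by (simp add: is_heyting_def)
next
  case (disj G a b)
  have h: "heyting_at D (Fo G)" by (rule hd_heyting[OF Fo_ob[OF form_ctx[OF disj(1)]]])
  then show ?case using disj.IH by (simp add: is_heyting_def)
next
  case (imp G a b)
  have h: "heyting_at D (Fo G)" by (rule hd_heyting[OF Fo_ob[OF form_ctx[OF imp(1)]]])
  then show ?case using imp.IH by (simp add: is_heyting_def)
next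
  case (all G x A a)
  have c: "Ctx (G @ [(x, A)]) \<in> J" using form_ctx[OF all(1)] .
  have x: "x = fr (ctxV G)" using ctx_snoc_var[OF db c] .
  have "I (G @ [(x, A)]) a \<in> Pr D (ext C (Fo G) (sg G (G, A)))" using all.IH Fo_ext[OF all(2)] x by simp
  then show ?case using hd_quant[OF Fo_ob[OF type_ctx'[OF all(2)]] sg_ty[OF all(2)]] by simp
next
  case (ex G x A a)
  have c: "Ctx (G @ [(x, A)]) \<in> J" using form_ctx[OF ex(1)] .
  have x: "x = fr (ctxV G)" using ctx_snoc_var[OF db c] .
  have "I (G @ [(x, A)]) a \<in> Pr D (ext C (Fo G) (sg G (G, A)))" using ex.IH Fo_ext[OF ex(2)] x by simp
  then show ?case using hd_quant[OF Fo_ob[OF type_ctx'[OF ex(2)]] sg_ty[OF ex(2)]] by simp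
qed


lemma I_subst: "(G, a) \<in> Form phi Sg Ps \<Longrightarrow> smor phi Sg D' G as \<Longrightarrow>
   I D' (fsub fr D' G as a) = psub D (Fm (D', G, as)) (I G a)"
proof (induction arbitrary: D' as rule: Form.induct)
  case (atom R GR "is" G bs)
  have l: "length bs = length GR" using atom by (simp add: smor_def)
  have e: "map ((!) bs) is = bs" using pred_args[OF atom(1) l] .
  have r: "Rstar R \<in> Pr D (Fo GR)" using rst atom by blast
  have "I D' (fsub fr D' G as (Pred R (map ((!) bs) is))) = psub D (Fm (D', GR, map (subst_tm (sub_of (OV G) as)) bs)) (Rstar R)"
    using atom(1) e by simp
  also have "\<dots> = psub D (comp C (Fm (G, GR, bs)) (Fm (D', G, as))) (Rstar R)"
    using Fm_comp[OF atom(3) atom(2)] by simp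
  also have "\<dots> = psub D (Fm (D', G, as)) (psub D (Fm (G, GR, bs)) (Rstar R))"
    using hd_comp[OF Fm_hom[OF atom(3)] Fm_hom[OF atom(2)] r] .
  finally show ?case using atom(1) e by simp
next
  case (bot G)
  then show ?case using hd_mor[OF Fm_hom[OF bot(2)]] by (simp add: is_heyting_mor_def)
next
  case (top G)
  then show ?case using hd_mor[OF Fm_hom[OF top(2)]] by (simp add: is_heyting_mor_def)
next
  case (conj G a b)
  then show ?case using hd_mor[OF Fm_hom[OF conj.prems]] I_Pr[OF conj.hyps(1)] I_Pr[OF conj.hyps(2)]
    by (simp add: is_heyting_mor_def)
next
  case (disj G a b)
  then show ?case using hd_mor[OF Fm_hom[OF disj.prems]] I_Pr[OF disj.hyps(1)] I_Pr[OF disj.hyps(2)]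
    by (simp add: is_heyting_mor_def)
next
  case (imp G a b)
  then show ?case using hd_mor[OF Fm_hom[OF imp.prems]] I_Pr[OF imp.hyps(1)] I_Pr[OF imp.hyps(2)]
    by (simp add: is_heyting_mor_def)
next
  case (all G x A a)
  have c: "Ctx (G @ [(x, A)]) \<in> J" using form_ctx[OF all(1)] .
  have x: "x = fr (ctxV G)" using ctx_snoc_var[OF db c] .
  define A' where "A' = subst_ty (sub_of (OV G) as) A"
  define y where "y = fr (ctxV D')"
  have cD: "Ctx D' \<in> J" using all(4) by (simp add: smor_def)
  have tA': "IsType D' A' \<in> J" unfolding A'_def by (rule type_subst'[OF all(2) all(4)])
  have cE: "Ctx (D' @ [(y, A')]) \<in> J" unfolding y_def by (rule ctx_snoc_I'[OF cD tA'])
  have smE: "smor phi Sg (D' @ [(y, A')]) (G @ [(x, A)]) (as @ [Var y])"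
    using smor_ext'[OF all(4) c cE[unfolded A'_def]] by (simp add: A'_def)
  have R: "I (G @ [(x, A)]) a \<in> Pr D (ext C (Fo G) (sg G (G, A)))"
    using I_Pr[OF all(1)] Fo_ext[OF all(2)] x by simp
  have "I D' (fsub fr D' G as (All x A a)) =
     pall D (Fo D') (sg D' (D', A')) (I (D' @ [(y, A')]) (fsub fr (D' @ [(y, A')]) (G @ [(x, A)]) (as @ [Var y]) a))"
    by (simp add: Let_def A'_def y_def)
  also have "\<dots> = pall D (Fo D') (sg D' (D', A')) (psub D (Fm (D' @ [(y, A')], G @ [(x, A)], as @ [Var y])) (I (G @ [(x, A)]) a))"
    using all.IH[OF smE] by simp
  also have "\<dots> = pall D (Fo D') (tsub C (sg G (G, A)) (Fm (D', G, as))) (psub D (qmor C (Fo D') (Fo G) (Fm (D', G, as)) (sg G (G, A))) (I (G @ [(x, A)]) a))"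
    using sg_sub[OF all(2) all(4)] qmor_Fm[OF all(2) all(4)] tA' x by (simp add: A'_def y_def)
  also have "\<dots> = psub D (Fm (D', G, as)) (pall D (Fo G) (sg G (G, A)) (I (G @ [(x, A)]) a))"
    using hd_bc[OF sg_ty[OF all(2)] Fm_hom[OF all(4)] R] by simp
  finally show ?case by simp
next
  case (ex G x A a)
  have c: "Ctx (G @ [(x, A)]) \<in> J" using form_ctx[OF ex(1)] .
  have x: "x = fr (ctxV G)" using ctx_snoc_var[OF db c] .
  define A' where "A' = subst_ty (sub_of (OV G) as) A"
  define y where "y = fr (ctxV D')"
  have cD: "Ctx D' \<in> J" using ex(4) by (simp add: smor_def)
  have tA': "IsType D' A' \<in> J" unfolding A'_def by (rule type_subst'[OF ex(2) ex(4)])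
  have cE: "Ctx (D' @ [(y, A')]) \<in> J" unfolding y_def by (rule ctx_snoc_I'[OF cD tA'])
  have smE: "smor phi Sg (D' @ [(y, A')]) (G @ [(x, A)]) (as @ [Var y])"
    using smor_ext'[OF ex(4) c cE[unfolded A'_def]] by (simp add: A'_def)
  have R: "I (G @ [(x, A)]) a \<in> Pr D (ext C (Fo G) (sg G (G, A)))"
    using I_Pr[OF ex(1)] Fo_ext[OF ex(2)] x by simp
  have "I D' (fsub fr D' G as (Ex x A a)) =
     pex D (Fo D') (sg D' (D', A')) (I (D' @ [(y, A')]) (fsub fr (D' @ [(y, A')]) (G @ [(x, A)]) (as @ [Var y]) a))"
    by (simp add: Let_def A'_def y_def)
  also have "\<dots> = pex D (Fo D') (sg D' (D', A')) (psub D (Fm (D' @ [(y, A')], G @ [(x, A)], as @ [Var y])) (I (G @ [(x, A)]) a))"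
    using ex.IH[OF smE] by simp
  also have "\<dots> = pex D (Fo D') (tsub C (sg G (G, A)) (Fm (D', G, as))) (psub D (qmor C (Fo D') (Fo G) (Fm (D', G, as)) (sg G (G, A))) (I (G @ [(x, A)]) a))"
    using sg_sub[OF ex(2) ex(4)] qmor_Fm[OF ex(2) ex(4)] tA' x by (simp add: A'_def y_def)
  also have "\<dots> = psub D (Fm (D', G, as)) (pex D (Fo G) (sg G (G, A)) (I (G @ [(x, A)]) a))"
    using hd_bc[OF sg_ty[OF ex(2)] Fm_hom[OF ex(4)] R] by simp
  finally show ?case by simp
qed


lemma seq_facts: "is_seq phi Sg Ps (G, a, b) \<Longrightarrow>
  I G a \<in> Pr D (Fo G) \<and> I G b \<in> Pr D (Fo G) \<and> heyting_at D (Fo G)"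
  unfolding is_seq_def using I_Pr hd_heyting[OF Fo_ob[OF form_ctx]] by auto

lemma wk_I: "(G, a) \<in> Form phi Sg Ps \<Longrightarrow> Ctx (G @ [(x, A)]) \<in> J \<Longrightarrow>
  I (G @ [(x, A)]) (wk fr G x A a) = psub D (prj C (Fo G) (sg G (G, A))) (I G a)"
proof -
  assume f: "(G, a) \<in> Form phi Sg Ps" and c: "Ctx (G @ [(x, A)]) \<in> J"
  have x: "x = fr (ctxV G)" using ctx_snoc_var[OF db c] .
  have t: "IsType G A \<in> J" using ctx_snoc_inv[OF c] by simp
  show ?thesis using I_subst[OF f smor_prj'[OF c]] Fm_prj[OF t] x by simp
qed

lemma all_facts: "(G, All x A b) \<in> Form phi Sg Ps \<Longrightarrow>
   (G @ [(x, A)], b) \<in> Form phi Sg Ps \<and> IsType G A \<in> J \<and> Ctx (G @ [(x, A)]) \<in> J \<and> x = fr (ctxV G) \<and>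
   Fo (G @ [(x, A)]) = ext C (Fo G) (sg G (G, A)) \<and> Fo G \<in> Ob C \<and> sg G (G, A) \<in> Tys C (Fo G)"
proof -
  assume "(G, All x A b) \<in> Form phi Sg Ps"
  then have f: "(G @ [(x, A)], b) \<in> Form phi Sg Ps" and t: "IsType G A \<in> J" by (auto elim: FormAllE)
  have c: "Ctx (G @ [(x, A)]) \<in> J" using form_ctx[OF f] .
  have x: "x = fr (ctxV G)" using ctx_snoc_var[OF db c] .
  show ?thesis using f t c x Fo_ext[OF t] Fo_ob[OF type_ctx'[OF t]] sg_ty[OF t] by simp
qed

lemma ex_facts: "(G, Ex x A b) \<in> Form phi Sg Ps \<Longrightarrow>
   (G @ [(x, A)], b) \<in> Form phi Sg Ps \<and> IsType G A \<in> J \<and> Ctx (G @ [(x, A)]) \<in> J \<and> x = fr (ctxV G) \<and>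
   Fo (G @ [(x, A)]) = ext C (Fo G) (sg G (G, A)) \<and> Fo G \<in> Ob C \<and> sg G (G, A) \<in> Tys C (Fo G)"
proof -
  assume "(G, Ex x A b) \<in> Form phi Sg Ps"
  then have f: "(G @ [(x, A)], b) \<in> Form phi Sg Ps" and t: "IsType G A \<in> J" by (auto elim: FormExE)
  have c: "Ctx (G @ [(x, A)]) \<in> J" using form_ctx[OF f] .
  have x: "x = fr (ctxV G)" using ctx_snoc_var[OF db c] .
  show ?thesis using f t c x Fo_ext[OF t] Fo_ob[OF type_ctx'[OF t]] sg_ty[OF t] by simp
qed

lemma sound: "s \<in> Thm phi fr Sg Ps {} \<Longrightarrow> (case s of (G, a, b) \<Rightarrow> ple D (Fo G) (I G a) (I G b))"
proof (induction rule: Thm.induct)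
  case (ax s) then show ?case by simp
next
  case (idt G a)
  note f = seq_facts[OF idt]
  show ?case using hrefl[OF conjunct2[OF conjunct2[OF f]] conjunct1[OF f]] by simp
next
  case (cut G a b c)
  have "is_seq phi Sg Ps (G, a, b)" using thm_seq[OF \<open>(G, a, b) \<in> Thm phi fr Sg Ps {}\<close>] .
  note f1 = seq_facts[OF this] and f2 = seq_facts[OF \<open>is_seq phi Sg Ps (G, a, c)\<close>]
  have l1: "ple D (Fo G) (I G a) (I G b)" and l2: "ple D (Fo G) (I G b) (I G c)" using cut.IH by simp_all
  have ib: "I G b \<in> Pr D (Fo G)" using f1 by simp
  show ?case using htrans[OF conjunct2[OF conjunct2[OF f2]] conjunct1[OF f2] ib conjunct1[OF conjunct2[OF f2]] l1 l2] by simp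
next
  case (conjE1 G a b)
  obtain fa: "(G, a) \<in> Form phi Sg Ps" and fb: "(G, b) \<in> Form phi Sg Ps" using conjE1 unfolding is_seq_def by (auto elim: FormConjE)
  note f = seq_facts[OF conjE1]
  show ?case using hmeetE1[OF conjunct2[OF conjunct2[OF f]] I_Pr[OF fa] I_Pr[OF fb]] by simp
next
  case (conjE2 G a b)
  obtain fa: "(G, a) \<in> Form phi Sg Ps" and fb: "(G, b) \<in> Form phi Sg Ps" using conjE2 unfolding is_seq_def by (auto elim: FormConjE)
  note f = seq_facts[OF conjE2]
  show ?case using hmeetE2[OF conjunct2[OF conjunct2[OF f]] I_Pr[OF fa] I_Pr[OF fb]] by simp
next
  case (conjI G c a b)
  obtain fa: "(G, a) \<in> Form phi Sg Ps" and fb: "(G, b) \<in> Form phi Sg Ps" using conjI unfolding is_seq_def by (auto elim: FormConjE)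
  note f = seq_facts[OF \<open>is_seq phi Sg Ps (G, c, Conj a b)\<close>]
  have l1: "ple D (Fo G) (I G c) (I G a)" and l2: "ple D (Fo G) (I G c) (I G b)" using conjI.IH by simp_all
  show ?case using hmeet[OF conjunct2[OF conjunct2[OF f]] I_Pr[OF fa] I_Pr[OF fb] conjunct1[OF f]] l1 l2 by simp
next
  case (topI G c)
  note f = seq_facts[OF topI]
  show ?case using htop[OF conjunct2[OF conjunct2[OF f]] conjunct1[OF f]] by simp
next
  case (disjI1 G a b)
  obtain fa: "(G, a) \<in> Form phi Sg Ps" and fb: "(G, b) \<in> Form phi Sg Ps" using disjI1 unfolding is_seq_def by (auto elim: FormDisjE)
  note f = seq_facts[OF disjI1]
  show ?case using hjoinI1[OF conjunct2[OF conjunct2[OF f]] I_Pr[OF fa] I_Pr[OF fb]] by simp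
next
  case (disjI2 G b a)
  obtain fa: "(G, a) \<in> Form phi Sg Ps" and fb: "(G, b) \<in> Form phi Sg Ps" using disjI2 unfolding is_seq_def by (auto elim: FormDisjE)
  note f = seq_facts[OF disjI2]
  show ?case using hjoinI2[OF conjunct2[OF conjunct2[OF f]] I_Pr[OF fa] I_Pr[OF fb]] by simp
next
  case (disjE G a c b)
  obtain fa: "(G, a) \<in> Form phi Sg Ps" and fb: "(G, b) \<in> Form phi Sg Ps" using disjE unfolding is_seq_def by (auto elim: FormDisjE)
  note f = seq_facts[OF \<open>is_seq phi Sg Ps (G, Disj a b, c)\<close>]
  have l1: "ple D (Fo G) (I G a) (I G c)" and l2: "ple D (Fo G) (I G b) (I G c)" using disjE.IH by simp_all
  show ?case using hjoin[OF conjunct2[OF conjunct2[OF f]] I_Pr[OF fa] I_Pr[OF fb] conjunct1[OF conjunct2[OF f]]] l1 l2 by simp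
next
  case (botE G c)
  note f = seq_facts[OF botE]
  show ?case using hbot[OF conjunct2[OF conjunct2[OF f]] conjunct1[OF conjunct2[OF f]]] by simp
next
  case (impI G a b c)
  obtain fb: "(G, b) \<in> Form phi Sg Ps" and fc: "(G, c) \<in> Form phi Sg Ps" using impI unfolding is_seq_def by (auto elim: FormImpE)
  note f = seq_facts[OF \<open>is_seq phi Sg Ps (G, a, Imp b c)\<close>]
  have l: "ple D (Fo G) (pmeet D (Fo G) (I G a) (I G b)) (I G c)" using impI.IH by simp
  show ?case using himp[OF conjunct2[OF conjunct2[OF f]] I_Pr[OF fb] I_Pr[OF fc] conjunct1[OF f]] l by simp
next
  case (impE G a b c)
  have "is_seq phi Sg Ps (G, a, Imp b c)" using thm_seq[OF \<open>(G, a, Imp b c) \<in> Thm phi fr Sg Ps {}\<close>] .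
  then obtain fa: "(G, a) \<in> Form phi Sg Ps" and fb: "(G, b) \<in> Form phi Sg Ps" and fc: "(G, c) \<in> Form phi Sg Ps"
    unfolding is_seq_def by (auto elim: FormImpE)
  note f = seq_facts[OF \<open>is_seq phi Sg Ps (G, Conj a b, c)\<close>]
  have l: "ple D (Fo G) (I G a) (pimp D (Fo G) (I G b) (I G c))" using impE.IH by simp
  show ?case using himp[OF conjunct2[OF conjunct2[OF f]] I_Pr[OF fb] I_Pr[OF fc] I_Pr[OF fa]] l by simp
next
  case (allI G x A a b)
  have fa: "(G, a) \<in> Form phi Sg Ps" and fb: "(G, All x A b) \<in> Form phi Sg Ps"
    using \<open>is_seq phi Sg Ps (G, a, All x A b)\<close> by (auto simp: is_seq_def)
  from all_facts[OF fb] have fb': "(G @ [(x, A)], b) \<in> Form phi Sg Ps"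
    and fo: "Fo (G @ [(x, A)]) = ext C (Fo G) (sg G (G, A))" and ob: "Fo G \<in> Ob C"
    and st: "sg G (G, A) \<in> Tys C (Fo G)" and cx: "Ctx (G @ [(x, A)]) \<in> J" by blast+
  have w: "I (G @ [(x, A)]) (wk fr G x A a) = psub D (prj C (Fo G) (sg G (G, A))) (I G a)"
    by (rule wk_I[OF fa cx])
  have rb: "I (G @ [(x, A)]) b \<in> Pr D (ext C (Fo G) (sg G (G, A)))" using I_Pr[OF fb'] fo by simp
  note adj = hd_all_adj[OF ob st I_Pr[OF fa] rb]
  show ?case using allI.IH adj w fo by simp
next
  case (allE G a x A b)
  have "is_seq phi Sg Ps (G, a, All x A b)" using thm_seq[OF \<open>(G, a, All x A b) \<in> Thm phi fr Sg Ps {}\<close>] .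
  then have fa: "(G, a) \<in> Form phi Sg Ps" and fb: "(G, All x A b) \<in> Form phi Sg Ps" by (auto simp: is_seq_def)
  from all_facts[OF fb] have fb': "(G @ [(x, A)], b) \<in> Form phi Sg Ps"
    and fo: "Fo (G @ [(x, A)]) = ext C (Fo G) (sg G (G, A))" and ob: "Fo G \<in> Ob C"
    and st: "sg G (G, A) \<in> Tys C (Fo G)" and cx: "Ctx (G @ [(x, A)]) \<in> J" by blast+
  have w: "I (G @ [(x, A)]) (wk fr G x A a) = psub D (prj C (Fo G) (sg G (G, A))) (I G a)"
    by (rule wk_I[OF fa cx])
  have rb: "I (G @ [(x, A)]) b \<in> Pr D (ext C (Fo G) (sg G (G, A)))" using I_Pr[OF fb'] fo by simp
  note adj = hd_all_adj[OF ob st I_Pr[OF fa] rb]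
  show ?case using allE.IH adj w fo by simp
next
  case (exE G x A b a)
  have fa: "(G, a) \<in> Form phi Sg Ps" and fb: "(G, Ex x A b) \<in> Form phi Sg Ps"
    using \<open>is_seq phi Sg Ps (G, Ex x A b, a)\<close> by (auto simp: is_seq_def)
  from ex_facts[OF fb] have fb': "(G @ [(x, A)], b) \<in> Form phi Sg Ps"
    and fo: "Fo (G @ [(x, A)]) = ext C (Fo G) (sg G (G, A))" and ob: "Fo G \<in> Ob C"
    and st: "sg G (G, A) \<in> Tys C (Fo G)" and cx: "Ctx (G @ [(x, A)]) \<in> J" by blast+
  have w: "I (G @ [(x, A)]) (wk fr G x A a) = psub D (prj C (Fo G) (sg G (G, A))) (I G a)"
    by (rule wk_I[OF fa cx])
  have rb: "I (G @ [(x, A)]) b \<in> Pr D (ext C (Fo G) (sg G (G, A)))" using I_Pr[OF fb'] fo by simp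
  note adj = hd_ex_adj[OF ob st I_Pr[OF fa] rb]
  show ?case using exE.IH adj w fo by simp
next
  case (exI G x A b a)
  have "is_seq phi Sg Ps (G, Ex x A b, a)" using thm_seq[OF \<open>(G, Ex x A b, a) \<in> Thm phi fr Sg Ps {}\<close>] .
  then have fa: "(G, a) \<in> Form phi Sg Ps" and fb: "(G, Ex x A b) \<in> Form phi Sg Ps" by (auto simp: is_seq_def)
  from ex_facts[OF fb] have fb': "(G @ [(x, A)], b) \<in> Form phi Sg Ps"
    and fo: "Fo (G @ [(x, A)]) = ext C (Fo G) (sg G (G, A))" and ob: "Fo G \<in> Ob C"
    and st: "sg G (G, A) \<in> Tys C (Fo G)" and cx: "Ctx (G @ [(x, A)]) \<in> J" by blast+
  have w: "I (G @ [(x, A)]) (wk fr G x A a) = psub D (prj C (Fo G) (sg G (G, A))) (I G a)"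
    by (rule wk_I[OF fa cx])
  have rb: "I (G @ [(x, A)]) b \<in> Pr D (ext C (Fo G) (sg G (G, A)))" using I_Pr[OF fb'] fo by simp
  note adj = hd_ex_adj[OF ob st I_Pr[OF fa] rb]
  show ?case using exI.IH adj w fo by simp
next
  case (subst G a b D' as)
  have "is_seq phi Sg Ps (G, a, b)" using thm_seq[OF \<open>(G, a, b) \<in> Thm phi fr Sg Ps {}\<close>] .
  then have fa: "(G, a) \<in> Form phi Sg Ps" and fb: "(G, b) \<in> Form phi Sg Ps" by (auto simp: is_seq_def)
  show ?case using subst.IH I_subst[OF fa \<open>smor phi Sg D' G as\<close>] I_subst[OF fb \<open>smor phi Sg D' G as\<close>] I_Pr[OF fa] I_Pr[OF fb]
    hd_mor[OF Fm_hom[OF \<open>smor phi Sg D' G as\<close>]] unfolding is_heyting_mor_def by simp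
qed


abbreviation "LTH \<equiv> LT phi fr Sg Ps {}"

lemma LT_Pr: "p \<in> Pr LTH X \<longleftrightarrow> (\<exists>a. p = (X, a) \<and> (X, a) \<in> Form phi Sg Ps)"
  by (auto simp: LT_def)

lemma existence: "is_Fbased_mor FS LTH C D Fo Fm sg (\<lambda>X p. I X (snd p))"
  unfolding is_Fbased_mor_def
proof (intro HOL.conjI ballI HOL.allI HOL.impI)
  fix X assume "X \<in> Ob FS"
  show "is_heyting_mor (Pr LTH X) (ple LTH X) (ptop LTH X) (pbot LTH X) (pmeet LTH X) (pjoin LTH X) (pimp LTH X)
       (Pr D (Fo X)) (ple D (Fo X)) (ptop D (Fo X)) (pbot D (Fo X)) (pmeet D (Fo X))
       (pjoin D (Fo X)) (pimp D (Fo X)) ((\<lambda>X p. I X (snd p)) X)"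
    unfolding is_heyting_mor_def
  proof (intro HOL.conjI ballI HOL.impI)
    fix x assume "x \<in> Pr LTH X"
    then obtain a where "x = (X, a)" "(X, a) \<in> Form phi Sg Ps" by (auto simp: LT_Pr)
    then show "I X (snd x) \<in> Pr D (Fo X)" using I_Pr by simp
  next
    fix x y assume "x \<in> Pr LTH X" "y \<in> Pr LTH X" "ple LTH X x y"
    then obtain a b where "x = (X, a)" "y = (X, b)" "(X, a, b) \<in> Thm phi fr Sg Ps {}"
      by (auto simp: LT_def)
    then show "ple D (Fo X) (I X (snd x)) (I X (snd y))" using sound by fastforce
  next
    fix x y assume "x \<in> Pr LTH X" "y \<in> Pr LTH X"
    then obtain a b where "x = (X, a)" "y = (X, b)" by (auto simp: LT_def)
    then show "I X (snd (pmeet LTH X x y)) = pmeet D (Fo X) (I X (snd x)) (I X (snd y))"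
      "I X (snd (pjoin LTH X x y)) = pjoin D (Fo X) (I X (snd x)) (I X (snd y))"
      "I X (snd (pimp LTH X x y)) = pimp D (Fo X) (I X (snd x)) (I X (snd y))"
      by (simp_all add: LT_def)
  qed (simp_all add: LT_def)
next
  fix X Y f R assume f: "f \<in> Hom FS X Y" and R: "R \<in> Pr LTH Y"
  from f obtain as where f': "f = (X, Y, as)" "smor phi Sg X Y as" by (auto simp: FSig_def)
  from R obtain a where R': "R = (Y, a)" "(Y, a) \<in> Form phi Sg Ps" by (auto simp: LT_Pr)
  show "I X (snd (psub LTH f R)) = psub D (Fm f) (I Y (snd R))"
    using I_subst[OF R'(2) f'(2)] f' R' by (simp add: LT_def)
next
  fix X S R assume X: "X \<in> Ob FS" and S: "S \<in> Tys FS X" and R: "R \<in> Pr LTH (ext FS X S)"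
  from S obtain A where S': "S = (X, A)" by (auto simp: FSig_def)
  from R obtain b where R': "R = (X @ [(fr (ctxV X), A)], b)" using S' by (auto simp: LT_def FSig_def)
  show "I X (snd (pall LTH X S R)) = pall D (Fo X) (sg X S) (I (ext FS X S) (snd R))"
    "I X (snd (pex LTH X S R)) = pex D (Fo X) (sg X S) (I (ext FS X S) (snd R))"
    using S' R' by (simp_all add: LT_def FSig_def)
qed

lemma atom_val: "Ps R = Some (GR, is) \<Longrightarrow> I GR (Pred R (map Var (OV GR))) = Rstar R"
proof -
  assume p: "Ps R = Some (GR, is)"
  have c: "Ctx GR \<in> J" using psig p by (auto simp: is_pred_sig_def)
  have r: "Rstar R \<in> Pr D (Fo GR)" using rst p by blast
  show ?thesis using p Fm_id[OF c] hd_id[OF Fo_ob[OF c] r] by simp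
qed

lemma uniqueness:
  assumes G': "is_Fbased_mor FS LTH C D Fo Fm sg G'"
    and at: "\<forall>R GR is. Ps R = Some (GR, is) \<longrightarrow> G' GR (GR, Pred R (map Var (OV GR))) = Rstar R"
  shows "(X, a) \<in> Form phi Sg Ps \<Longrightarrow> G' X (X, a) = I X a"
proof (induction rule: Form.induct)
  case (atom R GR "is" D' as)
  have l: "length as = length GR" using atom by (simp add: smor_def)
  have e: "map ((!) as) is = as" using pred_args[OF atom(1) l] .
  have cG: "Ctx GR \<in> J" using atom(2) by (simp add: smor_def)
  have d: "distinct (OV GR)" using ctx_distinct'[OF cG] .
  have e2: "map ((!) (map Var (OV GR))) is = map Var (OV GR)" using pred_args[OF atom(1), of "map Var (OV GR)"] by simp
  have fR: "(GR, Pred R (map Var (OV GR))) \<in> Form phi Sg Ps"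
  proof -
    have "(GR, Pred R (map ((!) (map Var (OV GR))) is)) \<in> Form phi Sg Ps"
      by (rule Form.atom[of Ps R GR "is" phi Sg GR "map Var (OV GR)", OF atom(1) smor_id'[OF cG]])
    then show ?thesis by (simp only: e2)
  qed
  have ps: "psub LTH (D', GR, as) (GR, Pred R (map Var (OV GR))) = (D', Pred R as)"
    using map_sub_of[OF d, of as] l by (simp add: LT_def map_subst_Var subst_comp_Var)
  have hom: "(D', GR, as) \<in> Hom FS D' GR" using atom(2) by (simp add: FSig_def)
  have "G' D' (D', Pred R as) = psub D (Fm (D', GR, as)) (G' GR (GR, Pred R (map Var (OV GR))))"
    using G'[unfolded is_Fbased_mor_def, THEN conjunct2, THEN conjunct1, rule_format, OF hom, of "(GR, Pred R (map Var (OV GR)))"] fR ps by (simp add: LT_def)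
  also have "\<dots> = psub D (Fm (D', GR, as)) (Rstar R)" using at atom(1) by simp
  finally show ?case using e atom(1) by simp
next
  case (bot G) then show ?case using G'[unfolded is_Fbased_mor_def, THEN conjunct1, rule_format, of G] by (simp add: FSig_def LT_def is_heyting_mor_def)
next
  case (top G) then show ?case using G'[unfolded is_Fbased_mor_def, THEN conjunct1, rule_format, of G] by (simp add: FSig_def LT_def is_heyting_mor_def)
next
  case (conj G a b)
  have "G \<in> Ob FS" using form_ctx[OF conj.hyps(1)] by (simp add: FSig_def)
  then show ?case using G'[unfolded is_Fbased_mor_def, THEN conjunct1, rule_format, of G] conj by (simp add: LT_def is_heyting_mor_def)
next
  case (disj G a b)
  have "G \<in> Ob FS" using form_ctx[OF disj.hyps(1)] by (simp add: FSig_def)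
  then show ?case using G'[unfolded is_Fbased_mor_def, THEN conjunct1, rule_format, of G] disj by (simp add: LT_def is_heyting_mor_def)
next
  case (imp G a b)
  have "G \<in> Ob FS" using form_ctx[OF imp.hyps(1)] by (simp add: FSig_def)
  then show ?case using G'[unfolded is_Fbased_mor_def, THEN conjunct1, rule_format, of G] imp by (simp add: LT_def is_heyting_mor_def)
next
  case (all G x A a)
  have c: "Ctx (G @ [(x, A)]) \<in> J" using form_ctx[OF all.hyps(1)] .
  have x: "x = fr (ctxV G)" using ctx_snoc_var[OF db c] .
  have ob: "G \<in> Ob FS" using type_ctx'[OF all.hyps(2)] by (simp add: FSig_def)
  have S: "(G, A) \<in> Tys FS G" using all.hyps(2) by (simp add: FSig_def)
  have R: "(G @ [(x, A)], a) \<in> Pr LTH (ext FS G (G, A))" using all.hyps(1) x by (simp add: FSig_def LT_def)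
  have "(G, All x A a) = pall LTH G (G, A) (G @ [(x, A)], a)" by (simp add: LT_def)
  then have "G' G (G, All x A a) = pall D (Fo G) (sg G (G, A)) (G' (G @ [(x, A)]) (G @ [(x, A)], a))"
    using G'[unfolded is_Fbased_mor_def, THEN conjunct2, THEN conjunct2, rule_format, OF ob S R] x by (simp add: FSig_def)
  then show ?case using all.IH by simp
next
  case (ex G x A a)
  have c: "Ctx (G @ [(x, A)]) \<in> J" using form_ctx[OF ex.hyps(1)] .
  have x: "x = fr (ctxV G)" using ctx_snoc_var[OF db c] .
  have ob: "G \<in> Ob FS" using type_ctx'[OF ex.hyps(2)] by (simp add: FSig_def)
  have S: "(G, A) \<in> Tys FS G" using ex.hyps(2) by (simp add: FSig_def)
  have R: "(G @ [(x, A)], a) \<in> Pr LTH (ext FS G (G, A))" using ex.hyps(1) x by (simp add: FSig_def LT_def)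
  have "(G, Ex x A a) = pex LTH G (G, A) (G @ [(x, A)], a)" by (simp add: LT_def)
  then have "G' G (G, Ex x A a) = pex D (Fo G) (sg G (G, A)) (G' (G @ [(x, A)]) (G @ [(x, A)], a))"
    using G'[unfolded is_Fbased_mor_def, THEN conjunct2, THEN conjunct2, rule_format, OF ob S R] x by (simp add: FSig_def)
  then show ?case using ex.IH by simp
qed

end

theorem mainTheorem19:
  fixes phi :: "'v set \<Rightarrow> 'v set" and fr :: "'v set \<Rightarrow> 'v"
    and Sg :: "('v, 'f, 't) sig"
    and Ps :: "('v, 'f, 't, 'p) psig"
    and C :: "('o, 'm, 'ty, 'tm) cwf"
    and Fo :: "('v, 'f, 't) ctx \<Rightarrow> 'o"
    and Fm :: "('v, 'f, 't) smorph \<Rightarrow> 'm"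
    and sg :: "('v, 'f, 't) ctx \<Rightarrow> ('v, 'f, 't) ctx \<times> ('v, 'f, 't) pty \<Rightarrow> 'ty"
    and th :: "('v, 'f, 't) ctx \<Rightarrow> ('v, 'f, 't) ctx \<times> ('v, 'f, 't) pty \<Rightarrow>
               (('v, 'f, 't) ctx \<times> ('v, 'f, 't) pty) \<times> ('v, 'f) ptm \<Rightarrow> 'tm"
    and D :: "('o, 'm, 'ty, 'pr) hdoc"
    and Rstar :: "'p \<Rightarrow> 'pr"
  assumes "varsys phi fr" and "debruijn phi fr"
    and "is_signature phi Sg" and "sig_standard Sg"
    and "is_cwf C"
    and "is_cwf_mor (FSig phi fr Sg) C Fo Fm sg th"
    and "is_pred_sig phi Sg Ps" and "pred_standard Ps"
    and "is_hdoc C D"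
    and "\<forall>R G is. Ps R = Some (G, is) \<longrightarrow> Rstar R \<in> Pr D (Fo G)"
  shows "\<exists>G. is_Fbased_mor (FSig phi fr Sg) (LT phi fr Sg Ps {}) C D Fo Fm sg G \<and>
            (\<forall>R GR is. Ps R = Some (GR, is) \<longrightarrow> G GR (GR, Pred R (map Var (OV GR))) = Rstar R) \<and>
            (\<forall>G'. is_Fbased_mor (FSig phi fr Sg) (LT phi fr Sg Ps {}) C D Fo Fm sg G' \<and>
                  (\<forall>R GR is. Ps R = Some (GR, is) \<longrightarrow> G' GR (GR, Pred R (map Var (OV GR))) = Rstar R)
               \<longrightarrow> (\<forall>X \<in> Ob (FSig phi fr Sg). \<forall>a \<in> Pr (LT phi fr Sg Ps {}) X. G' X a = G X a))"
proof -
  have L: "LL phi fr Sg Ps C Fo Fm sg th D Rstar"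
    unfolding LL_def using assms by simp
  show ?thesis
  proof (intro HOL.exI[of _ "\<lambda>X p. Intp Ps Fo Fm sg D Rstar X (snd p)"] HOL.conjI)
    show "is_Fbased_mor (FSig phi fr Sg) (LT phi fr Sg Ps {}) C D Fo Fm sg (\<lambda>X p. Intp Ps Fo Fm sg D Rstar X (snd p))"
      by (rule LL.existence[OF L])
    show "\<forall>R GR is. Ps R = Some (GR, is) \<longrightarrow> Intp Ps Fo Fm sg D Rstar GR (snd (GR, Pred R (map Var (OV GR)))) = Rstar R"
      using LL.atom_val[OF L] by simp
    show "\<forall>G'. is_Fbased_mor (FSig phi fr Sg) (LT phi fr Sg Ps {}) C D Fo Fm sg G' \<and>
                  (\<forall>R GR is. Ps R = Some (GR, is) \<longrightarrow> G' GR (GR, Pred R (map Var (OV GR))) = Rstar R)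
               \<longrightarrow> (\<forall>X \<in> Ob (FSig phi fr Sg). \<forall>a \<in> Pr (LT phi fr Sg Ps {}) X. G' X a = Intp Ps Fo Fm sg D Rstar X (snd a))"
    proof (intro HOL.allI HOL.impI ballI)
      fix G' X a
      assume h: "is_Fbased_mor (FSig phi fr Sg) (LT phi fr Sg Ps {}) C D Fo Fm sg G' \<and>
                  (\<forall>R GR is. Ps R = Some (GR, is) \<longrightarrow> G' GR (GR, Pred R (map Var (OV GR))) = Rstar R)"
        and a: "a \<in> Pr (LT phi fr Sg Ps {}) X"
      from a obtain b where b: "a = (X, b)" "(X, b) \<in> Form phi Sg Ps" by (auto simp: LT_def)
      show "G' X a = Intp Ps Fo Fm sg D Rstar X (snd a)"
        using LL.uniqueness[OF L conjunct1[OF h] conjunct2[OF h] b(2)] b(1) by simp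
    qed
  qed
qed

end
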